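(* Assume the standing setting and hypotheses (H1), (H2), (H3) below, let $p\in[1,+\infty]$, and equip $X$ and $Y$ with $\|\cdot\|_p$. The following are equivalent: (i) the system (P) with state space $X$ is exp-ISS w.r.t. inputs in $\mathcal{U}$: there are $M,a>0$ and $\gamma\in\mathcal{K}_\infty$ with $\|\phi(t,x,u)\|_p\le Me^{-at}\|x\|_p+\gamma(\|u\|_{\mathcal{U}})$ for all $t\ge0$, $x\in X$, $u\in\mathcal{U}(x)$; (ii) the same estimate holds for all $t\ge0$, $x\in X$ and all $u\in\mathcal{U}(x)$ which are constant in time (i.e. $u(t,z)=u(0,z)$ for all $t\ge0$, $z\in\partial G$); (iii) the system (Q) with state space $Y$ is exp-ISS w.r.t. inputs in $\mathcal{V}$: there are $M,a>0$, $\gamma\in\mathcal{K}_\infty$ with $\|\phi_Y(t,y,v)\|_p\le Me^{-at}\|y\|_p+\gamma(\|v\|_{\mathcal{V}})$ for all $t\ge0$, $y\in Y$, $v\in\mathcal{V}$.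
   Context: Standing setting: $G\subset\mathbb{R}^n$ open and bounded; $CL=C^0(\mathbb{R}_+\times\overline G)\cap C^{1,2}((0,\infty)\times G)$; $x[t]:=x(t,\cdot)$. $L$: $(Lx)(t,z)=\partial_tx-\sum_{i,j=1}^na_{ij}(z)\partial_{z_i}\partial_{z_j}x-f(z,x,\nabla x)$, $a_{ij}\in C^0(\overline G)$, $f\in C^0(\overline G\times\mathbb{R}\times\mathbb{R}^n)$, uniformly parabolic ($\sum a_{ij}(z)\xi_i\xi_j\ge K|\xi|^2$, $K>0$). Problem (P): $Lx=0$ on $(0,\infty)\times G$, $x(0,\cdot)=x_0$ on $G$, $x=u$ on $\mathbb{R}_+\times\partial G$. $\mathcal{U}=\{u\in C^0(\mathbb{R}_+;C^0(\partial G)):u\text{ bounded}\}$, $\|u\|_{\mathcal{U}}=\sup_{t\ge0,z\in\partial G}|u(t,z)|$, ordered pointwise. $\phi(t,x_0,u)=x[t]$ denotes the unique classical solution of (P). (H1) There is a linear space $X\subseteq C^0(\overline G)$ containing all constant functions, and for each $x_0\in X$ a nonempty set $\mathcal{U}(x_0)\subseteq\{v\in\mathcal{U}:v(0,z)=x_0(z)\ \forall z\in\partial G\}$ containing every $v\in\mathcal{U}$ with $v(t,z)=x_0(z)$ for all $z\in\partial G$, $t\ge0$, such that for every $x_0\in X$, $u\in\mathcal{U}(x_0)$ problem (P) has a solution $x\in CL$ with $x[t]\in X$ for all $t\ge0$. (H2) For every bounded $W\subset\mathbb{R}$ there is $k>0$ with $f(z,w_1,\xi)-f(z,w_2,\xi)<k(w_1-w_2)$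 for all $w_1>w_2$ in $W$, $z\in G$, $\xi\in\mathbb{R}^n$; and $f$ is continuously differentiable w.r.t. $(w,\xi)$. (H3) For every $\delta>0$, $a\in\mathbb{R}$, $x\in X$ there is a continuous $k:\overline G\to[0,1]$ with $k=1$ on $\partial G$, $k(z)=0$ whenever $z\in G$ and $\inf_{s\in\partial G}|z-s|\ge\delta$, and $(1-k)x+ak\in X$. System (Q): $\partial_ty-\sum a_{ij}(z)\partial_{z_i}\partial_{z_j}y-f(z,y+v,\nabla y)=0$ on $(0,\infty)\times G$, $y=0$ on $\mathbb{R}_+\times\partial G$, with state space $Y=\{y\in X:y=0\text{ on }\partial G\}$ and inputs $\mathcal{V}=\{v\in C^0(\mathbb{R}_+\times\overline G):v\equiv k\text{ for some }k\in\mathbb{R}\}$, $\|v\|_{\mathcal{V}}=|k|$. Its solution is $\phi_Y(t,y,v)=\phi(t,y+v,v|_{\partial G})-v$. $\mathcal{K}_\infty$: continuous, strictly increasing, unbounded $\gamma:\mathbb{R}_+\to\mathbb{R}_+$ with $\gamma(0)=0$. *)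

theory Defs
  imports "HOL-Analysis.Analysis"
begin

type_synonym 'n pt = "real^'n"

definition partial_at :: "('n::finite pt \<Rightarrow> real) \<Rightarrow> 'n \<Rightarrow> 'n pt \<Rightarrow> real \<Rightarrow> bool" where
  "partial_at g i z d \<longleftrightarrow> ((\<lambda>h. g (z + h *\<^sub>R axis i 1)) has_real_derivative d) (at 0)"

definition C12_derivs ::
  "'n::finite pt set \<Rightarrow> (real \<Rightarrow> 'n pt \<Rightarrow> real) \<Rightarrow> (real \<Rightarrow> 'n pt \<Rightarrow> real)
   \<Rightarrow> ('n \<Rightarrow> real \<Rightarrow> 'n pt \<Rightarrow> real) \<Rightarrow> ('n \<Rightarrow> 'n \<Rightarrow> real \<Rightarrow> 'n pt \<Rightarrow> real) \<Rightarrow> bool" where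
  "C12_derivs G x xt Dx Dxx \<longleftrightarrow>
     (\<forall>t>0. \<forall>z\<in>G.
        ((\<lambda>s. x s z) has_real_derivative xt t z) (at t) \<and>
        (\<forall>i. partial_at (x t) i z (Dx i t z)) \<and>
        (\<forall>i j. partial_at (\<lambda>w. Dx j t w) i z (Dxx i j t z))) \<and>
     continuous_on ({0<..} \<times> G) (\<lambda>(t,z). xt t z) \<and>
     (\<forall>i. continuous_on ({0<..} \<times> G) (\<lambda>(t,z). Dx i t z)) \<and>
     (\<forall>i j. continuous_on ({0<..} \<times> G) (\<lambda>(t,z). Dxx i j t z))"

definition in_CL :: "'n::finite pt set \<Rightarrow> (real \<Rightarrow> 'n pt \<Rightarrow> real) \<Rightarrow> bool" where
  "in_CL G x \<longleftrightarrow> continuous_on ({0..} \<times> closure G) (\<lambda>(t,z). x t z) \<and>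
                 (\<exists>xt Dx Dxx. C12_derivs G x xt Dx Dxx)"

definition classical_solution ::
  "('n \<Rightarrow> 'n \<Rightarrow> 'n::finite pt \<Rightarrow> real) \<Rightarrow> ('n pt \<Rightarrow> real \<Rightarrow> 'n pt \<Rightarrow> real) \<Rightarrow> 'n pt set
   \<Rightarrow> ('n pt \<Rightarrow> real) \<Rightarrow> (real \<Rightarrow> 'n pt \<Rightarrow> real) \<Rightarrow> (real \<Rightarrow> 'n pt \<Rightarrow> real) \<Rightarrow> bool" where
  "classical_solution a f G x0 u x \<longleftrightarrow>
     in_CL G x \<and>
     (\<exists>xt Dx Dxx. C12_derivs G x xt Dx Dxx \<and>
        (\<forall>t>0. \<forall>z\<in>G. xt t z - (\<Sum>i\<in>UNIV. \<Sum>j\<in>UNIV. a i j z * Dxx i j t z)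
                          - f z (x t z) (\<chi> i. Dx i t z) = 0)) \<and>
     (\<forall>z\<in>G. x 0 z = x0 z) \<and>
     (\<forall>t\<ge>0. \<forall>z\<in>frontier G. x t z = u t z)"

text \<open>phi(t,x0,u) = x[t] for the (unique) classical solution x; as a function it is
  taken on closure G (values outside closure G are irrelevant and fixed to undefined).\<close>
definition phi ::
  "('n \<Rightarrow> 'n \<Rightarrow> 'n::finite pt \<Rightarrow> real) \<Rightarrow> ('n pt \<Rightarrow> real \<Rightarrow> 'n pt \<Rightarrow> real) \<Rightarrow> 'n pt set
   \<Rightarrow> real \<Rightarrow> ('n pt \<Rightarrow> real) \<Rightarrow> (real \<Rightarrow> 'n pt \<Rightarrow> real) \<Rightarrow> ('n pt \<Rightarrow> real)" where
  "phi a f G t x0 u = (THE w. \<exists>x. classical_solution a f G x0 u x \<and> w = restrict (x t) (closure G))"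

text \<open>Solution of (Q): phi_Y(t,y,v) = phi(t, y+v, v|\<partial>G) - v.\<close>
definition phiY ::
  "('n \<Rightarrow> 'n \<Rightarrow> 'n::finite pt \<Rightarrow> real) \<Rightarrow> ('n pt \<Rightarrow> real \<Rightarrow> 'n pt \<Rightarrow> real) \<Rightarrow> 'n pt set
   \<Rightarrow> real \<Rightarrow> ('n pt \<Rightarrow> real) \<Rightarrow> (real \<Rightarrow> 'n pt \<Rightarrow> real) \<Rightarrow> ('n pt \<Rightarrow> real)" where
  "phiY a f G t y v = (\<lambda>z. phi a f G t (\<lambda>z. y z + v 0 z) v z - v t z)"

text \<open>Input space \<U>: continuous maps R_+ \<rightarrow> C^0(\<partial>G) (sup-norm topology), bounded.\<close>
definition Ucal :: "'n::finite pt set \<Rightarrow> (real \<Rightarrow> 'n pt \<Rightarrow> real) set" where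
  "Ucal G = {u. (\<forall>t\<ge>0. continuous_on (frontier G) (u t)) \<and>
                (\<forall>t\<ge>0. \<forall>e>0. \<exists>d>0. \<forall>s\<ge>0. \<bar>s - t\<bar> < d \<longrightarrow>
                    (\<forall>z\<in>frontier G. \<bar>u s z - u t z\<bar> \<le> e)) \<and>
                (\<exists>B. \<forall>t\<ge>0. \<forall>z\<in>frontier G. \<bar>u t z\<bar> \<le> B)}"

definition Unorm :: "'n::finite pt set \<Rightarrow> (real \<Rightarrow> 'n pt \<Rightarrow> real) \<Rightarrow> real" where
  "Unorm G u = (SUP q\<in>{0..} \<times> frontier G. \<bar>u (fst q) (snd q)\<bar>)"

definition pnorm :: "'n::finite pt set \<Rightarrow> ereal \<Rightarrow> ('n pt \<Rightarrow> real) \<Rightarrow> real" where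
  "pnorm G p x = (if p = \<infinity> then (SUP z\<in>G. \<bar>x z\<bar>)
     else (LINT z:G|lebesgue. \<bar>x z\<bar> powr real_of_ereal p) powr (1 / real_of_ereal p))"

definition Kinf :: "(real \<Rightarrow> real) \<Rightarrow> bool" where
  "Kinf \<gamma> \<longleftrightarrow> continuous_on {0..} \<gamma> \<and> strict_mono_on {0..} \<gamma> \<and> \<gamma> 0 = 0 \<and>
              (\<forall>B. \<exists>r\<ge>0. \<gamma> r > B)"

definition H1 ::
  "('n \<Rightarrow> 'n \<Rightarrow> 'n::finite pt \<Rightarrow> real) \<Rightarrow> ('n pt \<Rightarrow> real \<Rightarrow> 'n pt \<Rightarrow> real) \<Rightarrow> 'n pt set
   \<Rightarrow> ('n pt \<Rightarrow> real) set \<Rightarrow> (('n pt \<Rightarrow> real) \<Rightarrow> (real \<Rightarrow> 'n pt \<Rightarrow> real) set) \<Rightarrow> bool" where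
  "H1 a f G X Uset \<longleftrightarrow>
     (\<forall>x\<in>X. continuous_on (closure G) x) \<and>
     (\<forall>x\<in>X. \<forall>y\<in>X. (\<lambda>z. x z + y z) \<in> X) \<and>
     (\<forall>x\<in>X. \<forall>c. (\<lambda>z. c * x z) \<in> X) \<and>
     (\<forall>c. (\<lambda>z. c) \<in> X) \<and>
     (\<forall>x0\<in>X.
        Uset x0 \<noteq> {} \<and>
        Uset x0 \<subseteq> {v \<in> Ucal G. \<forall>z\<in>frontier G. v 0 z = x0 z} \<and>
        (\<forall>v\<in>Ucal G. (\<forall>t\<ge>0. \<forall>z\<in>frontier G. v t z = x0 z) \<longrightarrow> v \<in> Uset x0) \<and>
        (\<forall>u\<in>Uset x0. \<exists>x. classical_solution a f G x0 u x \<and> (\<forall>t\<ge>0. x t \<in> X)))"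

definition H2 :: "'n::finite pt set \<Rightarrow> ('n pt \<Rightarrow> real \<Rightarrow> 'n pt \<Rightarrow> real) \<Rightarrow> bool" where
  "H2 G f \<longleftrightarrow>
     (\<forall>W::real set. bounded W \<longrightarrow> (\<exists>k>0. \<forall>w1\<in>W. \<forall>w2\<in>W. w1 > w2 \<longrightarrow>
        (\<forall>z\<in>G. \<forall>\<xi>. f z w1 \<xi> - f z w2 \<xi> < k * (w1 - w2)))) \<and>
     (\<exists>fw f\<xi>.
        (\<forall>z\<in>closure G. \<forall>w \<xi>. ((\<lambda>w'. f z w' \<xi>) has_real_derivative fw z w \<xi>) (at w) \<and>
            (\<forall>i. ((\<lambda>h. f z w (\<xi> + h *\<^sub>R axis i 1)) has_real_derivative f\<xi> i z w \<xi>) (at 0))) \<and>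
        continuous_on (closure G \<times> UNIV \<times> UNIV) (\<lambda>(z,w,\<xi>). fw z w \<xi>) \<and>
        (\<forall>i. continuous_on (closure G \<times> UNIV \<times> UNIV) (\<lambda>(z,w,\<xi>). f\<xi> i z w \<xi>)))"

definition H3 :: "'n::finite pt set \<Rightarrow> ('n pt \<Rightarrow> real) set \<Rightarrow> bool" where
  "H3 G X \<longleftrightarrow>
     (\<forall>\<delta>>0. \<forall>a::real. \<forall>x\<in>X. \<exists>k. continuous_on (closure G) k \<and>
        (\<forall>z\<in>closure G. 0 \<le> k z \<and> k z \<le> 1) \<and>
        (\<forall>z\<in>frontier G. k z = 1) \<and>
        (\<forall>z\<in>G. infdist z (frontier G) \<ge> \<delta> \<longrightarrow> k z = 0) \<and>
        (\<lambda>z. (1 - k z) * x z + a * k z) \<in> X)"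

end

theory Submission
  imports Defs
begin

definition qf :: "('n::finite \<Rightarrow> 'n \<Rightarrow> real) \<Rightarrow> ('n \<Rightarrow> real) \<Rightarrow> real" where
  "qf S \<xi> = (\<Sum>i\<in>UNIV. \<Sum>j\<in>UNIV. S i j * \<xi> i * \<xi> j)"

lemma sum_if_const: "(\<Sum>j\<in>A. if P then g j else 0) = (if P then sum g A else (0::real))"
  by simp

lemma mult_if01: "(x::real) * (if P then 1 else 0) = (if P then x else 0)"
  by simp

lemma qf_shift:
  fixes S :: "'n::finite \<Rightarrow> 'n \<Rightarrow> real"
  shows "qf S (\<lambda>m. \<xi> m + t * (if m = i then 1 else 0)) =
     qf S \<xi> + t * (\<Sum>j\<in>UNIV. S i j * \<xi> j) + t * (\<Sum>k\<in>UNIV. S k i * \<xi> k) + t^2 * S i i"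
proof -
  have "qf S (\<lambda>m. \<xi> m + t * (if m = i then 1 else 0)) =
    (\<Sum>k\<in>UNIV. \<Sum>j\<in>UNIV. S k j * \<xi> k * \<xi> j + t * (if j = i then S k j * \<xi> k else 0)
       + t * (if k = i then S k j * \<xi> j else 0) + t^2 * (if k = i then (if j = i then S k j else 0) else 0))"
    unfolding qf_def by (intro sum.cong refl) (auto simp: algebra_simps power2_eq_square)
  also have "\<dots> = qf S \<xi> + t * (\<Sum>k\<in>UNIV. S k i * \<xi> k) + t * (\<Sum>j\<in>UNIV. S i j * \<xi> j) + t^2 * S i i"
    unfolding qf_def sum.distrib sum_distrib_left[symmetric]
    by (simp add: sum_if_const)
  finally show ?thesis by simp
qed

lemma qf_e: "qf S (\<lambda>m. if m = i then 1 else 0) = S i i"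
  using qf_shift[of S "\<lambda>_. 0" 1 i] by (simp add: qf_def)

lemma qf_sym_CS:
  fixes S :: "'n::finite \<Rightarrow> 'n \<Rightarrow> real"
  assumes sym: "\<And>i j. S i j = S j i" and psd: "\<And>\<xi>. qf S \<xi> \<ge> 0" and pos: "S i i > 0"
  shows "(\<Sum>j\<in>UNIV. S i j * \<xi> j)^2 \<le> S i i * qf S \<xi>"
proof -
  define b where "b = (\<Sum>j\<in>UNIV. S i j * \<xi> j)"
  have bb: "(\<Sum>k\<in>UNIV. S k i * \<xi> k) = b" unfolding b_def using sym by (simp add: sym)
  have "0 \<le> qf S (\<lambda>m. \<xi> m + (- b / S i i) * (if m = i then 1 else 0))" by (rule psd)
  also have "\<dots> = qf S \<xi> - b^2 / S i i"
    unfolding qf_shift bb b_def[symmetric] using pos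
    by (simp add: field_simps power2_eq_square)
  finally show ?thesis using pos unfolding b_def[symmetric] by (simp add: field_simps)
qed

lemma row_zero:
  fixes S :: "'n::finite \<Rightarrow> 'n \<Rightarrow> real"
  assumes sym: "\<And>i j. S i j = S j i" and psd: "\<And>\<xi>. qf S \<xi> \<ge> 0" and z: "S i i = 0"
  shows "S i j = 0"
proof (rule ccontr)
  assume ne: "S i j \<noteq> 0"
  define e where "e = (\<lambda>m::'n. if m = j then (1::real) else 0)"
  define t where "t = - (S j j + 1) / (2 * S i j)"
  have "0 \<le> qf S (\<lambda>m. e m + t * (if m = i then 1 else 0))" by (rule psd)
  also have "\<dots> = S j j + 2 * t * S i j"
    unfolding qf_shift using z sym[of j i] by (simp add: e_def qf_e[unfolded e_def] power2_eq_square mult_if01)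
  also have "\<dots> = -1" using ne by (simp add: t_def field_simps)
  finally show False by simp
qed

lemma trace_nonneg_aux:
  fixes A :: "'n::finite \<Rightarrow> 'n \<Rightarrow> real"
  assumes A: "\<And>\<xi>. qf A \<xi> \<ge> 0" and I: "finite I"
  shows "\<forall>S. (\<forall>i j. S i j = S j i) \<longrightarrow> (\<forall>\<xi>. qf S \<xi> \<ge> 0) \<longrightarrow>
            (\<forall>i j. i \<notin> I \<or> j \<notin> I \<longrightarrow> S i j = 0) \<longrightarrow>
            (\<Sum>i\<in>UNIV. \<Sum>j\<in>UNIV. A i j * S i j) \<ge> 0"
  using I
proof (induction I rule: finite_induct)
  case empty
  then show ?case by simp
next
  case (insert i I)
  show ?case
  proof (intro allI impI)
    fix S :: "'n \<Rightarrow> 'n \<Rightarrow> real"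
    assume sym: "\<forall>i j. S i j = S j i" and psd: "\<forall>\<xi>. qf S \<xi> \<ge> 0"
      and supp: "\<forall>i' j. i' \<notin> insert i I \<or> j \<notin> insert i I \<longrightarrow> S i' j = 0"
    have sii: "S i i \<ge> 0" using psd qf_e[of S i] by metis
    show "(\<Sum>i\<in>UNIV. \<Sum>j\<in>UNIV. A i j * S i j) \<ge> 0"
    proof (cases "S i i = 0")
      case True
      have rz: "S i j = 0" for j using row_zero[of S i j] sym psd True by blast
      have "\<forall>i' j. i' \<notin> I \<or> j \<notin> I \<longrightarrow> S i' j = 0"
      proof (intro allI impI)
        fix i' j assume "i' \<notin> I \<or> j \<notin> I"
        then consider "i' = i" | "j = i" | "i' \<notin> insert i I" | "j \<notin> insert i I" by blast
        then show "S i' j = 0" using rz sym supp by metis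
      qed
      then show ?thesis using insert.IH sym psd by blast
    next
      case False
      then have pos: "S i i > 0" using sii by simp
      define v where "v = (\<lambda>j. S j i / sqrt (S i i))"
      define S' where "S' = (\<lambda>k j. S k j - v k * v j)"
      have sym': "\<forall>k j. S' k j = S' j k" unfolding S'_def using sym by (simp add: mult.commute)
      have vv: "v k * v j = S k i * S j i / S i i" for k j
        using pos unfolding v_def by (simp add: field_simps)
      have psd': "\<forall>\<xi>. qf S' \<xi> \<ge> 0"
      proof
        fix \<xi>
        have e1: "qf S' \<xi> = qf S \<xi> - (\<Sum>k\<in>UNIV. v k * \<xi> k)^2"
          unfolding qf_def S'_def power2_eq_square sum_product
          by (simp add: algebra_simps sum_subtractf)
        have "(\<Sum>k\<in>UNIV. v k * \<xi> k) = (\<Sum>k\<in>UNIV. S i k * \<xi> k) / sqrt (S i i)"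
          unfolding v_def using sym by (simp add: sum_divide_distrib)
        then have "(\<Sum>k\<in>UNIV. v k * \<xi> k)^2 = (\<Sum>k\<in>UNIV. S i k * \<xi> k)^2 / S i i"
          using pos by (simp add: power_divide)
        also have "\<dots> \<le> qf S \<xi>"
          using qf_sym_CS[of S i \<xi>] sym psd pos by (simp add: field_simps)
        finally show "qf S' \<xi> \<ge> 0" using e1 by simp
      qed
      have supp': "\<forall>k j. k \<notin> I \<or> j \<notin> I \<longrightarrow> S' k j = 0"
      proof (intro allI impI)
        fix k j assume "k \<notin> I \<or> j \<notin> I"
        then consider "k = i" | "j = i" | "k \<notin> insert i I" | "j \<notin> insert i I" by blast
        then show "S' k j = 0"
        proof cases
          case 1 then show ?thesis unfolding S'_def vv using pos sym by (simp add: field_simps)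
        next
          case 2 then show ?thesis unfolding S'_def vv using pos sym by (simp add: field_simps)
        next
          case 3 then have "S k i = 0" using supp by blast
          then show ?thesis unfolding S'_def vv using supp 3 by simp
        next
          case 4 then have "S j i = 0" using supp by blast
          then show ?thesis unfolding S'_def vv using supp 4 by simp
        qed
      qed
      have ih: "(\<Sum>k\<in>UNIV. \<Sum>j\<in>UNIV. A k j * S' k j) \<ge> 0"
        using insert.IH sym' psd' supp' by blast
      have "(\<Sum>k\<in>UNIV. \<Sum>j\<in>UNIV. A k j * S k j) =
            (\<Sum>k\<in>UNIV. \<Sum>j\<in>UNIV. A k j * S' k j) + qf A v"
        unfolding S'_def qf_def by (simp add: algebra_simps sum.distrib sum_subtractf)
      then show ?thesis using ih A[of v] by simp
    qed
  qed
qed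

lemma trace_nonneg:
  fixes A S :: "'n::finite \<Rightarrow> 'n \<Rightarrow> real"
  assumes "\<And>\<xi>. qf A \<xi> \<ge> 0" "\<And>i j. S i j = S j i" "\<And>\<xi>. qf S \<xi> \<ge> 0"
  shows "(\<Sum>i\<in>UNIV. \<Sum>j\<in>UNIV. A i j * S i j) \<ge> 0"
  using trace_nonneg_aux[OF assms(1), of UNIV] assms(2,3) by simp

lemma partial_line:
  assumes "partial_at F i (w + s *\<^sub>R axis i 1) d"
  shows "((\<lambda>s. F (w + s *\<^sub>R axis i 1)) has_real_derivative d) (at s)"
proof -
  have "((\<lambda>h. F (w + (h + s) *\<^sub>R axis i 1)) has_real_derivative d) (at 0)"
    using assms unfolding partial_at_def by (simp add: algebra_simps scaleR_add_left)
  then show ?thesis using DERIV_shift[of "\<lambda>s. F (w + s *\<^sub>R axis i 1)" d 0 s] by simp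
qed

lemma mvt_between:
  fixes \<phi> \<phi>' :: "real \<Rightarrow> real"
  assumes "\<And>s. \<bar>s\<bar> \<le> \<bar>b\<bar> \<Longrightarrow> s * b \<ge> 0 \<Longrightarrow> (\<phi> has_real_derivative \<phi>' s) (at s)"
  shows "\<exists>\<theta>. \<bar>\<theta>\<bar> \<le> \<bar>b\<bar> \<and> \<theta> * b \<ge> 0 \<and> \<phi> b - \<phi> 0 = b * \<phi>' \<theta>"
proof (cases b "0::real" rule: linorder_cases)
  case less
  have "\<exists>z>b. z < 0 \<and> \<phi> 0 - \<phi> b = (0 - b) * \<phi>' z"
    by (rule MVT2) (use less in \<open>auto intro!: assms simp: mult_nonpos_nonpos\<close>)
  then obtain z where "b < z" "z < 0" "\<phi> 0 - \<phi> b = (0 - b) * \<phi>' z" by blast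
  then show ?thesis using less by (intro exI[of _ z]) (auto simp: algebra_simps mult_nonpos_nonpos)
next
  case equal then show ?thesis by auto
next
  case greater
  have "\<exists>z>0. z < b \<and> \<phi> b - \<phi> 0 = (b - 0) * \<phi>' z"
    by (rule MVT2) (use greater in \<open>auto intro!: assms\<close>)
  then obtain z where "0 < z" "z < b" "\<phi> b - \<phi> 0 = (b - 0) * \<phi>' z" by blast
  then show ?thesis using greater by (intro exI[of _ z]) auto
qed

lemma norm_sum_axis_le:
  fixes h :: "real^'n"
  shows "norm (\<Sum>i\<in>J. h$i *\<^sub>R axis i (1::real)) \<le> (\<Sum>i\<in>J. \<bar>h$i\<bar>)"
  by (rule order_trans[OF norm_sum]) (simp add: norm_axis_1)

lemma mult_if01_r: "(x::real) * (if P then 1 else 0) = (if P then x else 0)"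
  by simp

lemma sum_axis_UNIV:
  fixes h :: "real^'n"
  shows "(\<Sum>i\<in>UNIV. h$i *\<^sub>R axis i (1::real)) = h"
  by (simp add: vec_eq_iff sum_component axis_def mult_if01_r)

lemma partials_deriv:
  fixes F :: "real^'n \<Rightarrow> real" and P :: "'n \<Rightarrow> real^'n \<Rightarrow> real"
  assumes U: "open U" and z: "z \<in> U" and pd: "\<And>y i. y \<in> U \<Longrightarrow> partial_at F i y (P i y)"
    and pc: "\<And>i. continuous_on U (P i)"
  shows "(F has_derivative (\<lambda>h. \<Sum>i\<in>UNIV. h$i * P i z)) (at z)"
proof -
  have bl: "bounded_linear (\<lambda>h::real^'n. \<Sum>i\<in>UNIV. h$i * P i z)"
    by (intro bounded_linear_sum bounded_linear_mult_const bounded_linear_vec_nth)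
  define N where "N = real CARD('n)"
  have N1: "N \<ge> 1" unfolding N_def by (simp add: Suc_le_eq)
  show ?thesis unfolding has_derivative_at_alt
  proof (intro conjI bl allI impI)
    fix e :: real assume e: "e > 0"
    define e' where "e' = e / N"
    have e': "e' > 0" using e N1 by (simp add: e'_def)
    have ev: "\<forall>\<^sub>F y in at z. \<forall>i. \<bar>P i y - P i z\<bar> < e'"
    proof (rule eventually_all_finite)
      fix i
      have "isCont (P i) z" using pc[of i] U z continuous_on_eq_continuous_at by blast
      then have "(P i \<longlongrightarrow> P i z) (at z)" by (simp add: isCont_def)
      then show "\<forall>\<^sub>F y in at z. \<bar>P i y - P i z\<bar> < e'"
        using e' unfolding tendsto_iff dist_real_def by blast
    qed
    obtain d1 where d1: "d1 > 0" "ball z d1 \<subseteq> U" using U z open_contains_ball by blast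
    obtain d2 where d2: "d2 > 0" "\<And>y. y \<noteq> z \<Longrightarrow> dist y z < d2 \<Longrightarrow> \<forall>i. \<bar>P i y - P i z\<bar> < e'"
      using ev unfolding eventually_at by auto
    define d where "d = min d1 d2"
    have d: "d > 0" using d1 d2 by (simp add: d_def)
    have inball: "y \<in> U \<and> (\<forall>i. \<bar>P i y - P i z\<bar> \<le> e')" if "norm (y - z) < d" for y
    proof -
      have "y \<in> ball z d1" using that by (simp add: d_def dist_norm norm_minus_commute)
      moreover have "\<forall>i. \<bar>P i y - P i z\<bar> \<le> e'"
        using d2(2)[of y] that e' by (cases "y = z") (auto simp: d_def dist_norm less_imp_le)
      ultimately show ?thesis using d1 by blast
    qed
    show "\<exists>d>0. \<forall>y. norm (y - z) < d \<longrightarrow>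
            norm (F y - F z - (\<Sum>i\<in>UNIV. (y - z) $ i * P i z)) \<le> e * norm (y - z)"
    proof (intro exI[of _ "d / N"] conjI allI impI)
      show "d / N > 0" using d N1 by simp
      fix y assume y: "norm (y - z) < d / N"
      define h where "h = y - z"
      have hsum: "(\<Sum>i\<in>UNIV. \<bar>h$i\<bar>) \<le> N * norm h"
      proof -
        have "(\<Sum>i\<in>UNIV. \<bar>h$i\<bar>) \<le> (\<Sum>i\<in>(UNIV::'n set). norm h)"
          by (intro sum_mono component_le_norm_cart)
        then show ?thesis by (simp add: N_def)
      qed
      have hsmall: "(\<Sum>i\<in>UNIV. \<bar>h$i\<bar>) < d"
        using hsum y N1 unfolding h_def by (simp add: field_simps)
      have claim: "\<bar>F (z + (\<Sum>i\<in>J. h$i *\<^sub>R axis i 1)) - F z - (\<Sum>i\<in>J. h$i * P i z)\<bar>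
                    \<le> e' * (\<Sum>i\<in>J. \<bar>h$i\<bar>)" for J
      proof -
        have "finite J" by simp
        then show ?thesis
        proof (induction J rule: finite_induct)
          case empty then show ?case by simp
        next
          case (insert j J)
          define w where "w = z + (\<Sum>i\<in>J. h$i *\<^sub>R axis i 1)"
          have pts: "norm (w + s *\<^sub>R axis j 1 - z) < d" if "\<bar>s\<bar> \<le> \<bar>h$j\<bar>" for s
          proof -
            have "norm (w + s *\<^sub>R axis j 1 - z) \<le> norm (\<Sum>i\<in>J. h$i *\<^sub>R axis i (1::real)) + \<bar>s\<bar>"
            proof -
              have eqn: "w + s *\<^sub>R axis j 1 - z = (\<Sum>i\<in>J. h$i *\<^sub>R axis i (1::real)) + s *\<^sub>R axis j 1"
                by (simp add: w_def)
              show ?thesis unfolding eqn using norm_triangle_ineq[of "\<Sum>i\<in>J. h$i *\<^sub>R axis i (1::real)" "s *\<^sub>R axis j 1"]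
                by (simp add: norm_axis_1)
            qed
            also have "\<dots> \<le> (\<Sum>i\<in>J. \<bar>h$i\<bar>) + \<bar>h$j\<bar>"
              using norm_sum_axis_le[of h J] that by simp
            also have "\<dots> = (\<Sum>i\<in>insert j J. \<bar>h$i\<bar>)" using insert by simp
            also have "\<dots> \<le> (\<Sum>i\<in>UNIV. \<bar>h$i\<bar>)" by (rule sum_mono2) auto
            finally show ?thesis using hsmall by simp
          qed
          have "\<exists>\<theta>. \<bar>\<theta>\<bar> \<le> \<bar>h$j\<bar> \<and> \<theta> * h$j \<ge> 0 \<and>
                 F (w + h$j *\<^sub>R axis j 1) - F (w + 0 *\<^sub>R axis j 1) = h$j * P j (w + \<theta> *\<^sub>R axis j 1)"
          proof (rule mvt_between)
            fix s assume "\<bar>s\<bar> \<le> \<bar>h$j\<bar>"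
            then have "w + s *\<^sub>R axis j 1 \<in> U" using inball pts by blast
            then show "((\<lambda>s. F (w + s *\<^sub>R axis j 1)) has_real_derivative P j (w + s *\<^sub>R axis j 1)) (at s)"
              by (intro partial_line pd)
          qed
          then obtain \<theta> where th: "\<bar>\<theta>\<bar> \<le> \<bar>h$j\<bar>"
            "F (w + h$j *\<^sub>R axis j 1) - F w = h$j * P j (w + \<theta> *\<^sub>R axis j 1)" by auto
          have "\<bar>P j (w + \<theta> *\<^sub>R axis j 1) - P j z\<bar> \<le> e'"
            using inball pts[OF th(1)] by (simp add: algebra_simps)
          then have A: "\<bar>F (w + h$j *\<^sub>R axis j 1) - F w - h$j * P j z\<bar> \<le> e' * \<bar>h$j\<bar>"
            unfolding th(2) by (simp add: abs_mult right_diff_distrib[symmetric] mult.commute[of e'] mult_left_mono)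
          have B: "\<bar>F w - F z - (\<Sum>i\<in>J. h$i * P i z)\<bar> \<le> e' * (\<Sum>i\<in>J. \<bar>h$i\<bar>)"
            using insert.IH unfolding w_def .
          have eq: "z + (\<Sum>i\<in>insert j J. h$i *\<^sub>R axis i 1) = w + h$j *\<^sub>R axis j 1"
            using insert by (simp add: w_def algebra_simps)
          show ?case unfolding eq using insert A B by (simp add: distrib_left)
        qed
      qed
      have "\<bar>F y - F z - (\<Sum>i\<in>UNIV. h$i * P i z)\<bar> \<le> e' * (\<Sum>i\<in>UNIV. \<bar>h$i\<bar>)"
        using claim[of UNIV] unfolding sum_axis_UNIV h_def by simp
      also have "\<dots> \<le> e' * (N * norm h)" using hsum e' by (simp add: mult_left_mono)
      also have "\<dots> = e * norm h" using N1 by (simp add: e'_def)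
      finally show "norm (F y - F z - (\<Sum>i\<in>UNIV. (y - z) $ i * P i z)) \<le> e * norm (y - z)"
        by (simp add: h_def)
    qed
  qed
qed

lemma cont_ball:
  fixes f :: "'a::metric_space \<Rightarrow> real"
  assumes "open U" "z \<in> U" "continuous_on U f" "e > 0"
  shows "\<exists>d>0. ball z d \<subseteq> U \<and> (\<forall>y\<in>ball z d. \<bar>f y - f z\<bar> < e)"
proof -
  have "isCont f z" using assms continuous_on_eq_continuous_at by blast
  then obtain d2 where d2: "d2 > 0" "\<And>y. dist y z < d2 \<Longrightarrow> dist (f y) (f z) < e"
    using assms(4) unfolding continuous_at_eps_delta by (metis dist_commute)
  obtain d1 where d1: "d1 > 0" "ball z d1 \<subseteq> U" using assms open_contains_ball by blast
  show ?thesis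
    by (rule exI[of _ "min d1 d2"]) (use d1 d2 in \<open>auto simp: dist_real_def dist_commute\<close>)
qed

lemma dir_deriv:
  fixes F :: "real^'n \<Rightarrow> real" and P :: "'n \<Rightarrow> real^'n \<Rightarrow> real"
  assumes U: "open U" and pd: "\<And>y i. y \<in> U \<Longrightarrow> partial_at F i y (P i y)"
    and pc: "\<And>i. continuous_on U (P i)" and q: "z + s *\<^sub>R \<xi> \<in> U"
  shows "((\<lambda>s. F (z + s *\<^sub>R \<xi>)) has_real_derivative (\<Sum>i\<in>UNIV. \<xi>$i * P i (z + s *\<^sub>R \<xi>))) (at s)"
proof -
  have d1: "((\<lambda>s::real. z + s *\<^sub>R \<xi>) has_derivative (\<lambda>s. s *\<^sub>R \<xi>)) (at s)"
    by (auto intro!: derivative_eq_intros)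
  have d2: "(F has_derivative (\<lambda>h. \<Sum>i\<in>UNIV. h$i * P i (z + s *\<^sub>R \<xi>))) (at (z + s *\<^sub>R \<xi>))"
    by (rule partials_deriv[OF U q pd pc])
  have "((F \<circ> (\<lambda>s. z + s *\<^sub>R \<xi>)) has_derivative
         ((\<lambda>h. \<Sum>i\<in>UNIV. h$i * P i (z + s *\<^sub>R \<xi>)) \<circ> (\<lambda>s. s *\<^sub>R \<xi>))) (at s)"
    by (rule diff_chain_at[OF d1 d2])
  then show ?thesis unfolding has_field_derivative_def o_def
    by (rule has_derivative_eq_rhs) (auto simp: o_def sum_distrib_left algebra_simps)
qed

lemma second_deriv_test:
  fixes g g' :: "real \<Rightarrow> real"
  assumes r: "r > 0" and mx: "\<And>s. \<bar>s\<bar> < r \<Longrightarrow> g s \<le> g 0"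
    and dg: "\<And>s. \<bar>s\<bar> < r \<Longrightarrow> (g has_real_derivative g' s) (at s)"
    and dg': "(g' has_real_derivative c) (at 0)" and g0: "g' 0 = 0"
  shows "c \<le> 0"
proof (rule ccontr)
  assume "\<not> c \<le> 0"
  then have "c > 0" by simp
  from DERIV_pos_inc_right[OF dg' this] obtain d where d: "d > 0" "\<And>h. h > 0 \<Longrightarrow> h < d \<Longrightarrow> g' 0 < g' (0 + h)"
    by blast
  define s where "s = min d r / 2"
  have s: "s > 0" "s < d" "s < r" using d r by (auto simp: s_def)
  have "\<exists>z>0. z < s \<and> g s - g 0 = (s - 0) * g' z"
    by (rule MVT2) (use s in \<open>auto intro!: dg\<close>)
  then obtain w where w: "0 < w" "w < s" "g s - g 0 = s * g' w" by auto
  have "g' w > 0" using d(2)[of w] w s g0 by simp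
  then have "g s - g 0 > 0" using w s by simp
  moreover have "g s \<le> g 0" using mx s by simp
  ultimately show False by simp
qed

lemma mixed_diff:
  fixes F :: "real^'n \<Rightarrow> real" and P :: "'n \<Rightarrow> real^'n \<Rightarrow> real"
    and P2 :: "'n \<Rightarrow> 'n \<Rightarrow> real^'n \<Rightarrow> real"
  assumes B: "ball z \<delta> \<subseteq> U" and h: "h > 0" "2 * h < \<delta>"
    and pd: "\<And>y j. y \<in> U \<Longrightarrow> partial_at F j y (P j y)"
    and pd2: "\<And>y i j. y \<in> U \<Longrightarrow> partial_at (P j) i y (P2 i j y)"
  shows "\<exists>q. norm (q - z) < \<delta> \<and>
    F (z + h *\<^sub>R axis i 1 + h *\<^sub>R axis j 1) - F (z + h *\<^sub>R axis i 1) - F (z + h *\<^sub>R axis j 1) + F z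
      = h^2 * P2 i j q"
proof -
  have inU: "z + a *\<^sub>R axis i 1 + b *\<^sub>R axis j 1 \<in> U" if "0 \<le> a" "a \<le> h" "0 \<le> b" "b \<le> h" for a b
  proof -
    have "norm (a *\<^sub>R axis i (1::real) + b *\<^sub>R axis j 1) \<le> a + b"
      using norm_triangle_ineq[of "a *\<^sub>R axis i (1::real)" "b *\<^sub>R axis j 1"] that by (simp add: norm_axis_1)
    then have "dist (z + a *\<^sub>R axis i 1 + b *\<^sub>R axis j 1) z < \<delta>"
      using that h by (simp add: dist_norm add.assoc)
    then show ?thesis using B by (auto simp: dist_commute)
  qed
  define \<phi> where "\<phi> = (\<lambda>s. F ((z + h *\<^sub>R axis i 1) + s *\<^sub>R axis j 1) - F (z + s *\<^sub>R axis j 1))"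
  define \<phi>' where "\<phi>' = (\<lambda>s. P j ((z + h *\<^sub>R axis i 1) + s *\<^sub>R axis j 1) - P j (z + s *\<^sub>R axis j 1))"
  have "\<exists>s1>0. s1 < h \<and> \<phi> h - \<phi> 0 = (h - 0) * \<phi>' s1"
  proof (rule MVT2)
    fix s assume s: "0 \<le> s" "s \<le> h"
    have u1: "(z + h *\<^sub>R axis i 1) + s *\<^sub>R axis j 1 \<in> U" using inU[of h s] s h by simp
    have u2: "z + s *\<^sub>R axis j 1 \<in> U" using inU[of 0 s] s h by simp
    show "(\<phi> has_real_derivative \<phi>' s) (at s)" unfolding \<phi>_def \<phi>'_def
      by (intro DERIV_diff partial_line pd u1 u2)
  qed (use h in simp)
  then obtain s1 where s1: "0 < s1" "s1 < h" "\<phi> h - \<phi> 0 = h * \<phi>' s1" by auto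
  define \<psi> where "\<psi> = (\<lambda>r. P j ((z + s1 *\<^sub>R axis j 1) + r *\<^sub>R axis i 1))"
  have "\<exists>r1>0. r1 < h \<and> \<psi> h - \<psi> 0 = (h - 0) * P2 i j ((z + s1 *\<^sub>R axis j 1) + r1 *\<^sub>R axis i 1)"
  proof (rule MVT2)
    fix r assume r: "0 \<le> r" "r \<le> h"
    have u: "(z + s1 *\<^sub>R axis j 1) + r *\<^sub>R axis i 1 \<in> U" using inU[of r s1] r s1
      by (simp add: algebra_simps)
    show "(\<psi> has_real_derivative P2 i j ((z + s1 *\<^sub>R axis j 1) + r *\<^sub>R axis i 1)) (at r)"
      unfolding \<psi>_def by (intro partial_line pd2 u)
  qed (use h in simp)
  then obtain r1 where r1: "0 < r1" "r1 < h"
    "\<psi> h - \<psi> 0 = h * P2 i j ((z + s1 *\<^sub>R axis j 1) + r1 *\<^sub>R axis i 1)" by auto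
  have phs: "\<phi>' s1 = \<psi> h - \<psi> 0" unfolding \<phi>'_def \<psi>_def by (simp add: algebra_simps)
  show ?thesis
  proof (intro exI conjI)
    have "norm (s1 *\<^sub>R axis j (1::real) + r1 *\<^sub>R axis i 1) \<le> s1 + r1"
      using norm_triangle_ineq[of "s1 *\<^sub>R axis j (1::real)" "r1 *\<^sub>R axis i 1"] s1 r1 by (simp add: norm_axis_1)
    then show "norm ((z + s1 *\<^sub>R axis j 1) + r1 *\<^sub>R axis i 1 - z) < \<delta>" using s1 r1 h by (simp add: add.assoc)
    have "F (z + h *\<^sub>R axis i 1 + h *\<^sub>R axis j 1) - F (z + h *\<^sub>R axis i 1) - F (z + h *\<^sub>R axis j 1) + F z
          = \<phi> h - \<phi> 0" unfolding \<phi>_def by simp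
    also have "\<dots> = h * (h * P2 i j ((z + s1 *\<^sub>R axis j 1) + r1 *\<^sub>R axis i 1))" using s1 r1 phs by simp
    finally show "F (z + h *\<^sub>R axis i 1 + h *\<^sub>R axis j 1) - F (z + h *\<^sub>R axis i 1) - F (z + h *\<^sub>R axis j 1) + F z
          = h^2 * P2 i j ((z + s1 *\<^sub>R axis j 1) + r1 *\<^sub>R axis i 1)" by (simp add: power2_eq_square)
  qed
qed

lemma schwarz:
  fixes F :: "real^'n \<Rightarrow> real" and P :: "'n \<Rightarrow> real^'n \<Rightarrow> real"
    and P2 :: "'n \<Rightarrow> 'n \<Rightarrow> real^'n \<Rightarrow> real"
  assumes U: "open U" and z: "z \<in> U"
    and pd: "\<And>y j. y \<in> U \<Longrightarrow> partial_at F j y (P j y)"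
    and pd2: "\<And>y i j. y \<in> U \<Longrightarrow> partial_at (P j) i y (P2 i j y)"
    and pc2: "\<And>i j. continuous_on U (P2 i j)"
  shows "P2 i j z = P2 j i z"
proof (rule ccontr)
  assume ne: "P2 i j z \<noteq> P2 j i z"
  define e where "e = \<bar>P2 i j z - P2 j i z\<bar> / 3"
  have e: "e > 0" using ne by (simp add: e_def)
  obtain d1 where d1: "d1 > 0" "ball z d1 \<subseteq> U" "\<forall>y\<in>ball z d1. \<bar>P2 i j y - P2 i j z\<bar> < e"
    using cont_ball[OF U z pc2 e] by blast
  obtain d2 where d2: "d2 > 0" "ball z d2 \<subseteq> U" "\<forall>y\<in>ball z d2. \<bar>P2 j i y - P2 j i z\<bar> < e"
    using cont_ball[OF U z pc2 e] by blast
  define \<delta> where "\<delta> = min d1 d2"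
  have \<delta>: "\<delta> > 0" "ball z \<delta> \<subseteq> U" using d1 d2 by (auto simp: \<delta>_def)
  define h where "h = \<delta> / 4"
  have h: "h > 0" "2 * h < \<delta>" using \<delta> by (auto simp: h_def)
  obtain q1 where q1: "norm (q1 - z) < \<delta>"
    "F (z + h *\<^sub>R axis i 1 + h *\<^sub>R axis j 1) - F (z + h *\<^sub>R axis i 1) - F (z + h *\<^sub>R axis j 1) + F z
      = h^2 * P2 i j q1"
    using mixed_diff[OF \<delta>(2) h pd pd2] by blast
  obtain q2 where q2: "norm (q2 - z) < \<delta>"
    "F (z + h *\<^sub>R axis j 1 + h *\<^sub>R axis i 1) - F (z + h *\<^sub>R axis j 1) - F (z + h *\<^sub>R axis i 1) + F z
      = h^2 * P2 j i q2"
    using mixed_diff[OF \<delta>(2) h pd pd2] by blast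
  have "h^2 * P2 i j q1 = h^2 * P2 j i q2" using q1(2) q2(2) by (simp add: algebra_simps)
  then have eq: "P2 i j q1 = P2 j i q2" using h by simp
  have "q1 \<in> ball z d1" "q2 \<in> ball z d2" using q1 q2 by (auto simp: \<delta>_def dist_norm norm_minus_commute)
  then have "\<bar>P2 i j q1 - P2 i j z\<bar> < e" "\<bar>P2 j i q2 - P2 j i z\<bar> < e" using d1 d2 by auto
  moreover have "P2 i j z - P2 j i z = (P2 i j z - P2 i j q1) + (P2 j i q2 - P2 j i z)" using eq by simp
  then have "\<bar>P2 i j z - P2 j i z\<bar> \<le> \<bar>P2 i j q1 - P2 i j z\<bar> + \<bar>P2 j i q2 - P2 j i z\<bar>"
    by (metis abs_minus_commute abs_triangle_ineq)
  ultimately have "\<bar>P2 i j z - P2 j i z\<bar> < 2 * e" by linarith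
  then show False using e unfolding e_def by simp
qed

lemma spatial_max:
  fixes F :: "real^'n \<Rightarrow> real" and P :: "'n \<Rightarrow> real^'n \<Rightarrow> real"
    and P2 :: "'n \<Rightarrow> 'n \<Rightarrow> real^'n \<Rightarrow> real" and A :: "'n \<Rightarrow> 'n \<Rightarrow> real"
  assumes U: "open U" and z0: "z0 \<in> U" and mx: "\<And>y. y \<in> U \<Longrightarrow> F y \<le> F z0"
    and pd: "\<And>y j. y \<in> U \<Longrightarrow> partial_at F j y (P j y)"
    and pd2: "\<And>y i j. y \<in> U \<Longrightarrow> partial_at (P j) i y (P2 i j y)"
    and pc: "\<And>i. continuous_on U (P i)"
    and pc2: "\<And>i j. continuous_on U (P2 i j)"
    and psd: "\<And>\<xi>::real^'n. (\<Sum>i\<in>UNIV. \<Sum>j\<in>UNIV. A i j * \<xi>$i * \<xi>$j) \<ge> 0"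
  shows "(\<forall>i. P i z0 = 0) \<and> (\<Sum>i\<in>UNIV. \<Sum>j\<in>UNIV. A i j * P2 i j z0) \<le> 0"
proof -
  obtain r where r: "r > 0" "ball z0 r \<subseteq> U" using U z0 open_contains_ball by blast
  have first: "P i z0 = 0" for i
  proof -
    have "((\<lambda>h. F (z0 + h *\<^sub>R axis i 1)) has_real_derivative P i z0) (at 0)"
      using pd[OF z0] unfolding partial_at_def .
    moreover have "\<forall>h. \<bar>0 - h\<bar> < r \<longrightarrow> F (z0 + h *\<^sub>R axis i 1) \<le> F (z0 + 0 *\<^sub>R axis i 1)"
    proof (intro allI impI)
      fix h :: real assume "\<bar>0 - h\<bar> < r"
      then have "z0 + h *\<^sub>R axis i 1 \<in> ball z0 r" by (simp add: dist_norm norm_axis_1)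
      then show "F (z0 + h *\<^sub>R axis i 1) \<le> F (z0 + 0 *\<^sub>R axis i 1)" using r mx by auto
    qed
    ultimately show ?thesis using DERIV_local_max[of _ "P i z0" 0 r] r by blast
  qed
  have second: "(\<Sum>j\<in>UNIV. \<xi>$j * (\<Sum>i\<in>UNIV. \<xi>$i * P2 i j z0)) \<le> 0" for \<xi> :: "real^'n"
  proof -
    define r' where "r' = r / (norm \<xi> + 1)"
    have r': "r' > 0" using r by (simp add: r'_def add_nonneg_pos)
    have inb: "z0 + s *\<^sub>R \<xi> \<in> U" if "\<bar>s\<bar> < r'" for s
    proof -
      have "\<bar>s\<bar> * norm \<xi> \<le> r' * norm \<xi>" using that by (simp add: mult_right_mono)
      also have "\<dots> < r"
      proof -
        have "r' * norm \<xi> = r * (norm \<xi> / (norm \<xi> + 1))" by (simp add: r'_def)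
        moreover have "norm \<xi> / (norm \<xi> + 1) < 1"
          by (subst divide_less_eq_1_pos) (auto simp: add_nonneg_pos)
        ultimately show ?thesis using r mult_strict_left_mono[of "norm \<xi> / (norm \<xi> + 1)" 1 r] by simp
      qed
      finally have "dist z0 (z0 + s *\<^sub>R \<xi>) < r" by (simp add: dist_norm)
      then show ?thesis using r by auto
    qed
    show ?thesis
    proof (rule second_deriv_test[where g = "\<lambda>s. F (z0 + s *\<^sub>R \<xi>)"
          and g' = "\<lambda>s. \<Sum>j\<in>UNIV. \<xi>$j * P j (z0 + s *\<^sub>R \<xi>)", OF r'])
      fix s :: real assume "\<bar>s\<bar> < r'"
      then show "F (z0 + s *\<^sub>R \<xi>) \<le> F (z0 + 0 *\<^sub>R \<xi>)" using mx inb by simp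
    next
      fix s :: real assume "\<bar>s\<bar> < r'"
      then show "((\<lambda>s. F (z0 + s *\<^sub>R \<xi>)) has_real_derivative (\<Sum>j\<in>UNIV. \<xi>$j * P j (z0 + s *\<^sub>R \<xi>))) (at s)"
        by (intro dir_deriv[OF U pd pc] inb)
    next
      have "((\<lambda>s. P j (z0 + s *\<^sub>R \<xi>)) has_real_derivative (\<Sum>i\<in>UNIV. \<xi>$i * P2 i j (z0 + 0 *\<^sub>R \<xi>))) (at 0)" for j
        using dir_deriv[OF U pd2 pc2, of z0 0 \<xi>] assms(2) by simp
      then show "((\<lambda>s. \<Sum>j\<in>UNIV. \<xi>$j * P j (z0 + s *\<^sub>R \<xi>)) has_real_derivative
                 (\<Sum>j\<in>UNIV. \<xi>$j * (\<Sum>i\<in>UNIV. \<xi>$i * P2 i j z0))) (at 0)"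
        by (auto intro!: DERIV_sum DERIV_cmult)
    next
      show "(\<Sum>j\<in>UNIV. \<xi>$j * P j (z0 + 0 *\<^sub>R \<xi>)) = 0" using first by simp
    qed
  qed
  have sym: "P2 i j z0 = P2 j i z0" for i j by (rule schwarz[OF U z0 pd pd2 pc2])
  have "(\<Sum>i\<in>UNIV. \<Sum>j\<in>UNIV. A i j * (- P2 i j z0)) \<ge> 0"
  proof (rule trace_nonneg)
    fix \<xi> :: "'n \<Rightarrow> real"
    show "qf A \<xi> \<ge> 0" using psd[of "\<chi> i. \<xi> i"] by (simp add: qf_def)
    have "(\<Sum>j\<in>UNIV. (\<chi> i. \<xi> i)$j * (\<Sum>i\<in>UNIV. (\<chi> i. \<xi> i)$i * P2 i j z0)) \<le> 0" by (rule second)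
    then have "(\<Sum>j\<in>UNIV. \<Sum>i\<in>UNIV. P2 i j z0 * \<xi> i * \<xi> j) \<le> 0"
      by (simp add: sum_distrib_left algebra_simps)
    then show "qf (\<lambda>i j. - P2 i j z0) \<xi> \<ge> 0" unfolding qf_def
      by (subst sum.swap) (simp add: sum_negf)
  next
    fix i j show "- P2 i j z0 = - P2 j i z0" using sym by simp
  qed
  then show ?thesis using first by (simp add: sum_negf)
qed

lemma time_max:
  fixes hf :: "real \<Rightarrow> real"
  assumes t0: "t0 > 0" and D: "(hf has_real_derivative D) (at t0)"
    and mx: "\<And>s. 0 < s \<Longrightarrow> s \<le> t0 \<Longrightarrow> hf s \<le> hf t0"
  shows "D \<ge> 0"
proof (rule ccontr)
  assume "\<not> D \<ge> 0"
  then have "D < 0" by simp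
  from DERIV_neg_dec_left[OF D this] obtain d where d: "d > 0"
    "\<And>h. h > 0 \<Longrightarrow> h < d \<Longrightarrow> hf t0 < hf (t0 - h)" by blast
  define h where "h = min d t0 / 2"
  have h: "h > 0" "h < d" "h < t0" using d t0 by (auto simp: h_def)
  have "hf t0 < hf (t0 - h)" using d(2) h by simp
  moreover have "hf (t0 - h) \<le> hf t0" using mx h by simp
  ultimately show False by simp
qed

lemma cont_slice:
  assumes "continuous_on ({0<..} \<times> G) (\<lambda>(t,z). g t z)" "t0 > 0"
  shows "continuous_on G (g t0)"
proof -
  have "continuous_on G (\<lambda>y. (\<lambda>(t,z). g t z) (t0, y))"
    by (rule continuous_on_compose2[OF assms(1)]) (use assms(2) in \<open>auto intro!: continuous_intros\<close>)
  then show ?thesis by simp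
qed

lemma comparison:
  fixes G :: "(real^'n) set" and a :: "'n \<Rightarrow> 'n \<Rightarrow> real^'n \<Rightarrow> real"
    and f :: "real^'n \<Rightarrow> real \<Rightarrow> real^'n \<Rightarrow> real"
  assumes G: "open G" "bounded G"
    and psd: "\<And>z \<xi>. z \<in> G \<Longrightarrow> (\<Sum>i\<in>UNIV. \<Sum>j\<in>UNIV. a i j z * \<xi>$i * \<xi>$j) \<ge> 0"
    and H2a: "\<forall>W::real set. bounded W \<longrightarrow> (\<exists>k>0. \<forall>w1\<in>W. \<forall>w2\<in>W. w1 > w2 \<longrightarrow>
        (\<forall>z\<in>G. \<forall>\<xi>. f z w1 \<xi> - f z w2 \<xi> < k * (w1 - w2)))"
    and S1: "classical_solution a f G x01 u1 x1" and S2: "classical_solution a f G x02 u2 x2"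
    and init: "\<And>z. z \<in> G \<Longrightarrow> x01 z \<le> x02 z"
    and bd: "\<And>t z. t \<ge> 0 \<Longrightarrow> z \<in> frontier G \<Longrightarrow> u1 t z \<le> u2 t z"
    and t: "t \<ge> 0" and z: "z \<in> closure G"
  shows "x1 t z \<le> x2 t z"
proof (rule ccontr)
  assume neg: "\<not> x1 t z \<le> x2 t z"
  obtain xt1 Dx1 Dxx1 where c1: "C12_derivs G x1 xt1 Dx1 Dxx1" and
    pde1: "\<forall>t>0. \<forall>z\<in>G. xt1 t z - (\<Sum>i\<in>UNIV. \<Sum>j\<in>UNIV. a i j z * Dxx1 i j t z)
                          - f z (x1 t z) (\<chi> i. Dx1 i t z) = 0"
    using S1 unfolding classical_solution_def by blast
  obtain xt2 Dx2 Dxx2 where c2: "C12_derivs G x2 xt2 Dx2 Dxx2" and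
    pde2: "\<forall>t>0. \<forall>z\<in>G. xt2 t z - (\<Sum>i\<in>UNIV. \<Sum>j\<in>UNIV. a i j z * Dxx2 i j t z)
                          - f z (x2 t z) (\<chi> i. Dx2 i t z) = 0"
    using S2 unfolding classical_solution_def by blast
  have cont1: "continuous_on ({0..} \<times> closure G) (\<lambda>(t,z). x1 t z)"
    and cont2: "continuous_on ({0..} \<times> closure G) (\<lambda>(t,z). x2 t z)"
    using S1 S2 unfolding classical_solution_def in_CL_def by auto
  have ic1: "\<forall>z\<in>G. x1 0 z = x01 z" and bc1: "\<forall>t\<ge>0. \<forall>z\<in>frontier G. x1 t z = u1 t z"
    using S1 unfolding classical_solution_def by auto
  have ic2: "\<forall>z\<in>G. x2 0 z = x02 z" and bc2: "\<forall>t\<ge>0. \<forall>z\<in>frontier G. x2 t z = u2 t z"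
    using S2 unfolding classical_solution_def by auto
  define K where "K = {0..t} \<times> closure G"
  have Kc: "compact K" unfolding K_def using G by (auto intro!: compact_Times simp: compact_closure)
  have Ksub: "K \<subseteq> {0..} \<times> closure G" unfolding K_def by auto
  have k1: "continuous_on K (\<lambda>(t,z). x1 t z)" and k2: "continuous_on K (\<lambda>(t,z). x2 t z)"
    using continuous_on_subset[OF cont1 Ksub] continuous_on_subset[OF cont2 Ksub] by auto
  define W where "W = (\<lambda>(t,z). x1 t z) ` K \<union> (\<lambda>(t,z). x2 t z) ` K"
  have "bounded W" unfolding W_def
    using compact_continuous_image[OF k1 Kc] compact_continuous_image[OF k2 Kc]
    by (auto intro!: compact_imp_bounded)
  then obtain k where k: "k > 0" and kW: "\<forall>w1\<in>W. \<forall>w2\<in>W. w1 > w2 \<longrightarrow>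
        (\<forall>z\<in>G. \<forall>\<xi>. f z w1 \<xi> - f z w2 \<xi> < k * (w1 - w2))" using H2a by blast
  define w where "w = (\<lambda>(s::real, y::real^'n). exp (- k * s) * (x1 s y - x2 s y))"
  have wc: "continuous_on K w"
  proof -
    have "continuous_on K (\<lambda>p. exp (- k * fst p) * ((\<lambda>(t,z). x1 t z) p - (\<lambda>(t,z). x2 t z) p))"
      by (intro continuous_intros k1 k2)
    then show ?thesis unfolding w_def by (simp add: case_prod_beta)
  qed
  have tzK: "(t, z) \<in> K" using t z by (simp add: K_def)
  obtain p0 where p0: "p0 \<in> K" "\<And>q. q \<in> K \<Longrightarrow> w q \<le> w p0"
    using continuous_attains_sup[OF Kc _ wc] tzK by blast
  obtain t0 z0 where p0eq: "p0 = (t0, z0)" by (cases p0)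
  have t0: "0 \<le> t0" "t0 \<le> t" and z0c: "z0 \<in> closure G" using p0 p0eq by (auto simp: K_def)
  have "w (t, z) > 0" using neg by (simp add: w_def)
  then have wpos: "w (t0, z0) > 0" using p0 tzK p0eq by force
  then have dpos: "x1 t0 z0 - x2 t0 z0 > 0" by (simp add: w_def zero_less_mult_iff)
  have clos: "closure G = G \<union> frontier G" using G closure_subset by (auto simp: frontier_def interior_open)
  have z0G: "z0 \<in> G"
  proof (rule ccontr)
    assume "z0 \<notin> G"
    then have "z0 \<in> frontier G" using z0c clos by auto
    then show False using bc1 bc2 bd[of t0 z0] t0 dpos by auto
  qed
  have t0pos: "t0 > 0"
  proof (rule ccontr)
    assume "\<not> t0 > 0"
    then have "t0 = 0" using t0 by simp
    then show False using ic1 ic2 init[OF z0G] z0G dpos by auto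
  qed
  note c1' = c1[unfolded C12_derivs_def] and c2' = c2[unfolded C12_derivs_def]
  have "((\<lambda>s. exp (- k * s) * (x1 s z0 - x2 s z0)) has_real_derivative
        (exp (- k * t0) * (- k)) * (x1 t0 z0 - x2 t0 z0) + (xt1 t0 z0 - xt2 t0 z0) * exp (- k * t0)) (at t0)"
    using c1' c2' t0pos z0G
    by (auto intro!: derivative_eq_intros)
  then have "exp (- k * t0) * (- k) * (x1 t0 z0 - x2 t0 z0) + (xt1 t0 z0 - xt2 t0 z0) * exp (- k * t0) \<ge> 0"
  proof (rule time_max[OF t0pos])
    fix s assume "0 < s" "s \<le> t0"
    then have "(s, z0) \<in> K" using t0 z0c by (auto simp: K_def)
    then show "exp (- k * s) * (x1 s z0 - x2 s z0) \<le> exp (- k * t0) * (x1 t0 z0 - x2 t0 z0)"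
      using p0 p0eq by (force simp: w_def)
  qed
  then have "exp (- k * t0) * ((xt1 t0 z0 - xt2 t0 z0) - k * (x1 t0 z0 - x2 t0 z0)) \<ge> 0"
    by (simp add: algebra_simps)
  then have timeineq: "xt1 t0 z0 - xt2 t0 z0 \<ge> k * (x1 t0 z0 - x2 t0 z0)"
    by (simp add: zero_le_mult_iff)
  have sp: "(\<forall>i. (\<lambda>y. Dx1 i t0 y - Dx2 i t0 y) z0 = 0) \<and>
      (\<Sum>i\<in>UNIV. \<Sum>j\<in>UNIV. a i j z0 * (\<lambda>i j y. Dxx1 i j t0 y - Dxx2 i j t0 y) i j z0) \<le> 0"
  proof (rule spatial_max[where F = "\<lambda>y. x1 t0 y - x2 t0 y", OF G(1) z0G])
    fix y assume y: "y \<in> G"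
    then have "(t0, y) \<in> K" using t0 closure_subset by (auto simp: K_def)
    then have "w (t0, y) \<le> w (t0, z0)" using p0 p0eq by force
    then show "x1 t0 y - x2 t0 y \<le> x1 t0 z0 - x2 t0 z0" by (simp add: w_def)
  next
    fix y j assume y: "y \<in> G"
    show "partial_at (\<lambda>y. x1 t0 y - x2 t0 y) j y (Dx1 j t0 y - Dx2 j t0 y)"
      using c1' c2' t0pos y unfolding partial_at_def by (auto intro!: DERIV_diff)
  next
    fix y i j assume y: "y \<in> G"
    show "partial_at (\<lambda>y. Dx1 j t0 y - Dx2 j t0 y) i y (Dxx1 i j t0 y - Dxx2 i j t0 y)"
      using c1' c2' t0pos y unfolding partial_at_def by (auto intro!: DERIV_diff)
  next
    fix i show "continuous_on G (\<lambda>y. Dx1 i t0 y - Dx2 i t0 y)"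
      using c1' c2' t0pos by (intro continuous_on_diff cont_slice[where g = "Dx1 i"] cont_slice[where g = "Dx2 i"]) auto
  next
    fix i j show "continuous_on G (\<lambda>y. Dxx1 i j t0 y - Dxx2 i j t0 y)"
      using c1' c2' t0pos by (intro continuous_on_diff cont_slice[where g = "Dxx1 i j"] cont_slice[where g = "Dxx2 i j"]) auto
  next
    fix \<xi> :: "real^'n" show "(\<Sum>i\<in>UNIV. \<Sum>j\<in>UNIV. a i j z0 * \<xi>$i * \<xi>$j) \<ge> 0" using psd z0G by blast
  qed
  have xieq: "(\<chi> i. Dx1 i t0 z0) = (\<chi> i. Dx2 i t0 z0)" using sp by (simp add: vec_eq_iff)
  have trace: "(\<Sum>i\<in>UNIV. \<Sum>j\<in>UNIV. a i j z0 * Dxx1 i j t0 z0) - (\<Sum>i\<in>UNIV. \<Sum>j\<in>UNIV. a i j z0 * Dxx2 i j t0 z0) \<le> 0"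
    using sp by (simp add: sum_subtractf[symmetric] right_diff_distrib)
  have inW: "x1 t0 z0 \<in> W" "x2 t0 z0 \<in> W" using p0 p0eq unfolding W_def by force+
  have fineq: "f z0 (x1 t0 z0) (\<chi> i. Dx1 i t0 z0) - f z0 (x2 t0 z0) (\<chi> i. Dx1 i t0 z0)
      < k * (x1 t0 z0 - x2 t0 z0)" using kW inW dpos z0G by auto
  have "xt1 t0 z0 - xt2 t0 z0 = ((\<Sum>i\<in>UNIV. \<Sum>j\<in>UNIV. a i j z0 * Dxx1 i j t0 z0) - (\<Sum>i\<in>UNIV. \<Sum>j\<in>UNIV. a i j z0 * Dxx2 i j t0 z0))
        + (f z0 (x1 t0 z0) (\<chi> i. Dx1 i t0 z0) - f z0 (x2 t0 z0) (\<chi> i. Dx1 i t0 z0))"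
    using pde1 pde2 t0pos z0G xieq by (auto simp: algebra_simps)
  then show False using trace fineq timeineq by linarith
qed

lemma uniqueness:
  fixes G :: "(real^'n) set" and a :: "'n \<Rightarrow> 'n \<Rightarrow> real^'n \<Rightarrow> real"
    and f :: "real^'n \<Rightarrow> real \<Rightarrow> real^'n \<Rightarrow> real"
  assumes G: "open G" "bounded G"
    and psd: "\<And>z \<xi>. z \<in> G \<Longrightarrow> (\<Sum>i\<in>UNIV. \<Sum>j\<in>UNIV. a i j z * \<xi>$i * \<xi>$j) \<ge> 0"
    and H2a: "\<forall>W::real set. bounded W \<longrightarrow> (\<exists>k>0. \<forall>w1\<in>W. \<forall>w2\<in>W. w1 > w2 \<longrightarrow>
        (\<forall>z\<in>G. \<forall>\<xi>. f z w1 \<xi> - f z w2 \<xi> < k * (w1 - w2)))"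
    and S: "classical_solution a f G x0 u x" and t: "t \<ge> 0"
  shows "phi a f G t x0 u = restrict (x t) (closure G)"
proof -
  have eq: "restrict (y t) (closure G) = restrict (x t) (closure G)"
    if "classical_solution a f G x0 u y" for y
  proof (rule ext)
    fix z show "restrict (y t) (closure G) z = restrict (x t) (closure G) z"
    proof (cases "z \<in> closure G")
      case True
      have "y t z \<le> x t z" by (rule comparison[OF G psd H2a that S _ _ t True]) auto
      moreover have "x t z \<le> y t z" by (rule comparison[OF G psd H2a S that _ _ t True]) auto
      ultimately show ?thesis using True by simp
    qed simp
  qed
  show ?thesis unfolding phi_def
  proof (rule the_equality)
    show "\<exists>y. classical_solution a f G x0 u y \<and> restrict (x t) (closure G) = restrict (y t) (closure G)"
      using S by blast
  next
    fix w assume "\<exists>y. classical_solution a f G x0 u y \<and> w = restrict (y t) (closure G)"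
    then show "w = restrict (x t) (closure G)" using eq by blast
  qed
qed

lemma cont_set_integrable:
  fixes G :: "(real^'n) set" and g :: "real^'n \<Rightarrow> real"
  assumes "open G" "bounded G" "continuous_on (closure G) g"
  shows "set_integrable lebesgue G g"
proof -
  have i: "integrable lborel (\<lambda>x. indicat_real (closure G) x *\<^sub>R g x)"
    by (rule borel_integrable_compact) (use assms in \<open>auto simp: compact_closure\<close>)
  then have "integrable lebesgue (\<lambda>x. indicat_real (closure G) x *\<^sub>R g x)"
    using integrable_completion borel_measurable_integrable by blast
  then have "set_integrable lebesgue (closure G) g" by (simp add: set_integrable_def)
  then show ?thesis by (rule set_integrable_subset) (use assms closure_subset in auto)
qed

lemma powr_cvx:
  fixes a b l q :: real
  assumes "0 \<le> a" "0 \<le> b" "0 \<le> l" "l \<le> 1" "1 \<le> q"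
  shows "(l * a + (1 - l) * b) powr q \<le> l * a powr q + (1 - l) * b powr q"
proof -
  have sc: "(c * x) powr q \<le> c * x powr q" if "0 \<le> c" "c \<le> 1" "0 \<le> x" for c x
  proof -
    have "(c * x) powr q = c powr q * x powr q" using that by (simp add: powr_mult)
    also have "c powr q \<le> c powr 1" by (rule powr_mono') (use that assms in auto)
    then have "c powr q * x powr q \<le> c * x powr q"
      using that by (cases "c = 0") (auto intro: mult_right_mono)
    finally show ?thesis .
  qed
  consider "a = 0" | "b = 0" | "a > 0 \<and> b > 0" using assms by linarith
  then show ?thesis
  proof cases
    case 1 then show ?thesis using sc[of "1 - l" b] assms by simp
  next
    case 2 then show ?thesis using sc[of l a] assms by simp
  next
    case 3
    have "(\<lambda>x. x powr q) ((1 - (1 - l)) *\<^sub>R a + (1 - l) *\<^sub>R b)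
          \<le> (1 - (1 - l)) * (\<lambda>x. x powr q) a + (1 - l) * (\<lambda>x. x powr q) b"
      by (rule convex_onD[OF powr_convex]) (use assms 3 in auto)
    then show ?thesis by simp
  qed
qed

definition Lq :: "(real^'n) set \<Rightarrow> real \<Rightarrow> (real^'n \<Rightarrow> real) \<Rightarrow> real" where
  "Lq G q f = (LINT z:G|lebesgue. \<bar>f z\<bar> powr q) powr (1 / q)"

definition Iq :: "(real^'n) set \<Rightarrow> real \<Rightarrow> (real^'n \<Rightarrow> real) \<Rightarrow> real" where
  "Iq G q f = (LINT z:G|lebesgue. \<bar>f z\<bar> powr q)"

lemma Iq_nonneg: "Iq G q f \<ge> 0"
  unfolding Iq_def set_lebesgue_integral_def by (rule Bochner_Integration.integral_nonneg) (simp add: indicator_def)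

lemma Lq_nonneg: "Lq G q f \<ge> 0" by (simp add: Lq_def)

lemma Iq_integrable:
  fixes G :: "(real^'n) set" and f :: "real^'n \<Rightarrow> real" and q :: real
  assumes "open G" "bounded G" "continuous_on (closure G) f" "q > 0"
  shows "set_integrable lebesgue G (\<lambda>z. \<bar>f z\<bar> powr q)"
  by (rule cont_set_integrable)
     (use assms in \<open>auto intro!: continuous_on_powr'[OF continuous_on_rabs[OF assms(3)] continuous_on_const]\<close>)

lemma Iq_Lq: "q > 0 \<Longrightarrow> Iq G q f = Lq G q f powr q"
  using Iq_nonneg[of G q f] by (simp add: Lq_def Iq_def[symmetric] powr_powr)

lemma Lq_mono:
  fixes G :: "(real^'n) set"
  assumes G: "open G" "bounded G" and f: "continuous_on (closure G) f" and g: "continuous_on (closure G) g"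
    and q: "q \<ge> 1" and le: "\<And>z. z \<in> G \<Longrightarrow> \<bar>f z\<bar> \<le> \<bar>g z\<bar>"
  shows "Lq G q f \<le> Lq G q g"
proof -
  have "Iq G q f \<le> Iq G q g" unfolding Iq_def
    by (rule set_integral_mono) (use Iq_integrable[OF G f] Iq_integrable[OF G g] q le in \<open>auto intro: powr_mono2\<close>)
  then show ?thesis unfolding Lq_def Iq_def[symmetric] using Iq_nonneg[of G q f] q
    by (intro powr_mono2) auto
qed

lemma Lq_const:
  fixes G :: "(real^'n) set"
  assumes G: "open G" "bounded G" and q: "q \<ge> 1"
  shows "Lq G q (\<lambda>z. c) = \<bar>c\<bar> * Lq G q (\<lambda>z. 1)"
proof -
  have fin: "emeasure lebesgue G \<noteq> \<infinity>"
    using emeasure_bounded_finite[OF G(2)] G(1) by (simp add: emeasure_completion)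
  have "Lq G q (\<lambda>z. c) = (measure lebesgue G * \<bar>c\<bar> powr q) powr (1/q)"
    unfolding Lq_def using G fin by (simp add: set_integral_const)
  also have "\<dots> = measure lebesgue G powr (1/q) * \<bar>c\<bar>"
    using q by (simp add: powr_mult powr_powr)
  also have "Lq G q (\<lambda>z. 1) = measure lebesgue G powr (1/q)"
    unfolding Lq_def using G fin by (simp add: set_integral_const)
  ultimately show ?thesis by simp
qed

lemma Lq_triangle:
  fixes G :: "(real^'n) set" and f g :: "real^'n \<Rightarrow> real"
  assumes G: "open G" "bounded G" and f: "continuous_on (closure G) f" and g: "continuous_on (closure G) g"
    and q: "q \<ge> 1"
  shows "Lq G q (\<lambda>z. f z + g z) \<le> Lq G q f + Lq G q g"
proof -
  have q0: "q > 0" using q by simp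
  have fg: "continuous_on (closure G) (\<lambda>z. f z + g z)" using f g by (intro continuous_intros)
  have key: "Lq G q (\<lambda>z. f z + g z) \<le> \<alpha> + \<beta>" if al: "\<alpha> > Lq G q f" and be: "\<beta> > Lq G q g" for \<alpha> \<beta>
  proof -
    have a0: "\<alpha> > 0" "\<beta> > 0" using al be Lq_nonneg[of G q f] Lq_nonneg[of G q g] by linarith+
    define l where "l = \<alpha> / (\<alpha> + \<beta>)"
    have l: "0 \<le> l" "l \<le> 1" "1 - l = \<beta> / (\<alpha> + \<beta>)" using a0 by (auto simp: l_def field_simps)
    have If: "Iq G q f \<le> \<alpha> powr q"
      unfolding Iq_Lq[OF q0] using al Lq_nonneg[of G q f] q0 by (intro powr_mono2) auto
    have Ig: "Iq G q g \<le> \<beta> powr q"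
      unfolding Iq_Lq[OF q0] using be Lq_nonneg[of G q g] q0 by (intro powr_mono2) auto
    define c1 where "c1 = (\<alpha> + \<beta>) powr q * l / \<alpha> powr q"
    define c2 where "c2 = (\<alpha> + \<beta>) powr q * (1 - l) / \<beta> powr q"
    have pw: "\<bar>f z + g z\<bar> powr q \<le> c1 * \<bar>f z\<bar> powr q + c2 * \<bar>g z\<bar> powr q" for z
    proof -
      have "\<bar>f z + g z\<bar> powr q \<le> (\<bar>f z\<bar> + \<bar>g z\<bar>) powr q"
        using q0 by (intro powr_mono2) auto
      also have "\<bar>f z\<bar> + \<bar>g z\<bar> = (\<alpha> + \<beta>) * (l * (\<bar>f z\<bar> / \<alpha>) + (1 - l) * (\<bar>g z\<bar> / \<beta>))"
      proof -
        have "(\<alpha> + \<beta>) * (l * (\<bar>f z\<bar> / \<alpha>)) = \<bar>f z\<bar>" using a0 by (simp add: l_def)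
        moreover have "(\<alpha> + \<beta>) * ((1 - l) * (\<bar>g z\<bar> / \<beta>)) = \<bar>g z\<bar>" using a0 unfolding l(3) by simp
        ultimately show ?thesis by (simp add: distrib_left)
      qed
      also have "((\<alpha> + \<beta>) * (l * (\<bar>f z\<bar> / \<alpha>) + (1 - l) * (\<bar>g z\<bar> / \<beta>))) powr q
          = (\<alpha> + \<beta>) powr q * (l * (\<bar>f z\<bar> / \<alpha>) + (1 - l) * (\<bar>g z\<bar> / \<beta>)) powr q"
        using a0 l by (intro powr_mult)
      also have "\<dots> \<le> (\<alpha> + \<beta>) powr q * (l * (\<bar>f z\<bar> / \<alpha>) powr q + (1 - l) * (\<bar>g z\<bar> / \<beta>) powr q)"
        using a0 l q by (intro mult_left_mono powr_cvx) auto
      also have "\<dots> = c1 * \<bar>f z\<bar> powr q + c2 * \<bar>g z\<bar> powr q"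
        using a0 by (simp add: c1_def c2_def powr_divide field_simps)
      finally show ?thesis .
    qed
    have intf: "set_integrable lebesgue G (\<lambda>z. \<bar>f z\<bar> powr q)" by (rule Iq_integrable[OF G f q0])
    have intg: "set_integrable lebesgue G (\<lambda>z. \<bar>g z\<bar> powr q)" by (rule Iq_integrable[OF G g q0])
    have intfg: "set_integrable lebesgue G (\<lambda>z. \<bar>f z + g z\<bar> powr q)" by (rule Iq_integrable[OF G fg q0])
    have int2: "set_integrable lebesgue G (\<lambda>z. c1 * \<bar>f z\<bar> powr q + c2 * \<bar>g z\<bar> powr q)"
      using intf intg by (intro set_integral_add set_integrable_mult_right) auto
    have "Iq G q (\<lambda>z. f z + g z) \<le> (LINT z:G|lebesgue. c1 * \<bar>f z\<bar> powr q + c2 * \<bar>g z\<bar> powr q)"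
      unfolding Iq_def by (rule set_integral_mono[OF intfg int2 pw])
    also have "\<dots> = c1 * Iq G q f + c2 * Iq G q g"
      using intf intg unfolding Iq_def
      by (simp add: set_integral_add set_integrable_mult_right set_integral_mult_right)
    also have "\<dots> \<le> c1 * \<alpha> powr q + c2 * \<beta> powr q"
      using If Ig a0 l by (intro add_mono mult_left_mono) (auto simp: c1_def c2_def)
    also have "\<dots> = (\<alpha> + \<beta>) powr q"
    proof -
      have "c1 * \<alpha> powr q = (\<alpha> + \<beta>) powr q * l" using a0 by (simp add: c1_def)
      moreover have "c2 * \<beta> powr q = (\<alpha> + \<beta>) powr q * (1 - l)" using a0 by (simp add: c2_def)
      ultimately show ?thesis by (simp add: algebra_simps)
    qed
    finally have "Iq G q (\<lambda>z. f z + g z) \<le> (\<alpha> + \<beta>) powr q" .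
    then have "Iq G q (\<lambda>z. f z + g z) powr (1/q) \<le> ((\<alpha> + \<beta>) powr q) powr (1/q)"
      using Iq_nonneg q0 by (intro powr_mono2) auto
    then show ?thesis using a0 q0 by (simp add: Lq_def Iq_def[symmetric] powr_powr)
  qed
  show ?thesis
  proof (rule ccontr)
    assume nt: "\<not> ?thesis"
    define e where "e = (Lq G q (\<lambda>z. f z + g z) - Lq G q f - Lq G q g) / 3"
    have e: "e > 0" using nt by (simp add: e_def)
    have "Lq G q (\<lambda>z. f z + g z) \<le> (Lq G q f + e) + (Lq G q g + e)" using e by (intro key) auto
    then show False using nt unfolding e_def by argo
  qed
qed

lemma bdd_abs:
  fixes G :: "(real^'n) set" and f :: "real^'n \<Rightarrow> real"
  assumes "bounded G" "continuous_on (closure G) f"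
  shows "bdd_above ((\<lambda>z. \<bar>f z\<bar>) ` G)"
proof -
  have "compact ((\<lambda>z. \<bar>f z\<bar>) ` closure G)"
    using assms by (intro compact_continuous_image continuous_intros) (auto simp: compact_closure)
  then have "bounded ((\<lambda>z. \<bar>f z\<bar>) ` closure G)" by (rule compact_imp_bounded)
  then have "bounded ((\<lambda>z. \<bar>f z\<bar>) ` G)" by (rule bounded_subset) (use closure_subset in auto)
  then show ?thesis by (rule bounded_imp_bdd_above)
qed

lemma pnorm_fin:
  assumes "1 \<le> p" "p \<noteq> \<infinity>"
  shows "pnorm G p f = Lq G (real_of_ereal p) f" "real_of_ereal p \<ge> 1"
proof -
  obtain r where r: "p = ereal r" using assms by (cases p) auto
  show "pnorm G p f = Lq G (real_of_ereal p) f" using r by (simp add: pnorm_def Lq_def)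
  show "real_of_ereal p \<ge> 1" using r assms by simp
qed

lemma pnorm_inf: "pnorm G \<infinity> f = (SUP z\<in>G. \<bar>f z\<bar>)" by (simp add: pnorm_def)

context
  fixes G :: "(real^'n) set" and p :: ereal
  assumes G: "open G" "bounded G" "G \<noteq> {}" and p: "1 \<le> p"
begin

lemma pn_nonneg:
  fixes f :: "real^'n \<Rightarrow> real"
  assumes f: "continuous_on (closure G) f"
  shows "pnorm G p f \<ge> 0"
proof (cases "p = \<infinity>")
  case True
  obtain z where z: "z \<in> G" using G by auto
  have "0 \<le> \<bar>f z\<bar>" by simp
  also have "\<dots> \<le> (SUP z\<in>G. \<bar>f z\<bar>)" by (rule cSUP_upper[OF z bdd_abs[OF G(2) f]])
  finally show ?thesis using True by (simp add: pnorm_inf)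
next
  case False then show ?thesis by (subst pnorm_fin(1)[OF p False]) (rule Lq_nonneg)
qed

lemma pn_mono:
  fixes f g :: "real^'n \<Rightarrow> real"
  assumes f: "continuous_on (closure G) f" and g: "continuous_on (closure G) g"
    and le: "\<And>z. z \<in> G \<Longrightarrow> \<bar>f z\<bar> \<le> \<bar>g z\<bar>"
  shows "pnorm G p f \<le> pnorm G p g"
proof (cases "p = \<infinity>")
  case True
  have "(SUP z\<in>G. \<bar>f z\<bar>) \<le> (SUP z\<in>G. \<bar>g z\<bar>)"
    by (rule cSUP_mono[OF G(3) bdd_abs[OF G(2) g]]) (use le in auto)
  then show ?thesis using True by (simp add: pnorm_inf)
next
  case False show ?thesis
    unfolding pnorm_fin(1)[OF p False] by (rule Lq_mono[OF G(1,2) f g pnorm_fin(2)[OF p False] le])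
qed

lemma pn_tri:
  fixes f g :: "real^'n \<Rightarrow> real"
  assumes f: "continuous_on (closure G) f" and g: "continuous_on (closure G) g"
  shows "pnorm G p (\<lambda>z. f z + g z) \<le> pnorm G p f + pnorm G p g"
proof (cases "p = \<infinity>")
  case True
  have "(SUP z\<in>G. \<bar>f z + g z\<bar>) \<le> (SUP z\<in>G. \<bar>f z\<bar>) + (SUP z\<in>G. \<bar>g z\<bar>)"
  proof (rule cSUP_least[OF G(3)])
    fix z assume z: "z \<in> G"
    have "\<bar>f z + g z\<bar> \<le> \<bar>f z\<bar> + \<bar>g z\<bar>" by (rule abs_triangle_ineq)
    also have "\<dots> \<le> (SUP z\<in>G. \<bar>f z\<bar>) + (SUP z\<in>G. \<bar>g z\<bar>)"
      by (intro add_mono cSUP_upper[OF z] bdd_abs[OF G(2)] f g)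
    finally show "\<bar>f z + g z\<bar> \<le> (SUP z\<in>G. \<bar>f z\<bar>) + (SUP z\<in>G. \<bar>g z\<bar>)" .
  qed
  then show ?thesis using True by (simp add: pnorm_inf)
next
  case False show ?thesis
    unfolding pnorm_fin(1)[OF p False] by (rule Lq_triangle[OF G(1,2) f g pnorm_fin(2)[OF p False]])
qed

lemma pn_const: "pnorm G p (\<lambda>z. c) = \<bar>c\<bar> * pnorm G p (\<lambda>z. 1)"
proof (cases "p = \<infinity>")
  case True then show ?thesis using G(3) by (simp add: pnorm_inf)
next
  case False show ?thesis
    unfolding pnorm_fin(1)[OF p False] by (rule Lq_const[OF G(1,2) pnorm_fin(2)[OF p False]])
qed

lemma pn_one: "pnorm G p (\<lambda>z. 1) \<ge> 0"
  by (rule pn_nonneg) simp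

lemma pn_abs: "pnorm G p (\<lambda>z. \<bar>f z\<bar>) = pnorm G p f"
  by (simp add: pnorm_def)

lemma pn_cong: "(\<And>z. z \<in> G \<Longrightarrow> f z = g z) \<Longrightarrow> pnorm G p f = pnorm G p g"
proof -
  assume eq: "\<And>z. z \<in> G \<Longrightarrow> f z = g z"
  show ?thesis
  proof (cases "p = \<infinity>")
    case True then show ?thesis using eq by (simp add: pnorm_inf)
  next
    case False
    have "(LINT z:G|lebesgue. \<bar>f z\<bar> powr real_of_ereal p) = (LINT z:G|lebesgue. \<bar>g z\<bar> powr real_of_ereal p)"
      by (rule set_lebesgue_integral_cong) (use eq G in auto)
    then show ?thesis using False by (simp add: pnorm_def)
  qed
qed

end

lemma const_Ucal: "(\<lambda>s z. k) \<in> Ucal G"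
  unfolding Ucal_def by (auto intro: exI[of _ "\<bar>k\<bar>"])

lemma Unorm_const:
  assumes "frontier G \<noteq> {}"
  shows "Unorm G (\<lambda>s z. k) = \<bar>k\<bar>"
proof -
  have ne: "{0::real..} \<times> frontier G \<noteq> {}" using assms by auto
  show ?thesis unfolding Unorm_def using ne by simp
qed

lemma Unorm_bound:
  assumes u: "u \<in> Ucal G" and s: "s \<ge> 0" and z: "z \<in> frontier G"
  shows "\<bar>u s z\<bar> \<le> Unorm G u"
proof -
  obtain B where B: "\<forall>t\<ge>0. \<forall>z\<in>frontier G. \<bar>u t z\<bar> \<le> B" using u unfolding Ucal_def by blast
  have bdd: "bdd_above ((\<lambda>q. \<bar>u (fst q) (snd q)\<bar>) ` ({0..} \<times> frontier G))"
    using B by (auto intro!: bdd_aboveI[of _ B])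
  have "(s, z) \<in> {0..} \<times> frontier G" using s z by auto
  from cSUP_upper[OF this bdd] show ?thesis unfolding Unorm_def by simp
qed

lemma Kinf_comb:
  assumes K: "Kinf \<gamma>" and b: "b \<ge> 1" and C: "C \<ge> 0"
  shows "Kinf (\<lambda>r. b * \<gamma> r + C * r)"
proof -
  have c: "continuous_on {0..} \<gamma>" and sm: "strict_mono_on {0..} \<gamma>" and g0: "\<gamma> 0 = 0"
    and ub: "\<forall>B. \<exists>r\<ge>0. \<gamma> r > B" using K unfolding Kinf_def by auto
  have gnn: "\<gamma> r \<ge> 0" if "r \<ge> 0" for r
  proof (cases "r = 0")
    case True then show ?thesis using g0 by simp
  next
    case False then have "\<gamma> 0 < \<gamma> r" using sm that by (auto simp: strict_mono_on_def)
    then show ?thesis using g0 by simp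
  qed
  show ?thesis unfolding Kinf_def
  proof (intro conjI allI)
    show "continuous_on {0..} (\<lambda>r. b * \<gamma> r + C * r)" using c by (intro continuous_intros)
    show "strict_mono_on {0..} (\<lambda>r. b * \<gamma> r + C * r)"
    proof (rule strict_mono_onI)
      fix r s :: real assume "r \<in> {0..}" "s \<in> {0..}" "r < s"
      then have "\<gamma> r < \<gamma> s" using sm by (auto simp: strict_mono_on_def)
      then have "b * \<gamma> r < b * \<gamma> s" using b by simp
      moreover have "C * r \<le> C * s" using C \<open>r < s\<close> by (intro mult_left_mono) auto
      ultimately show "b * \<gamma> r + C * r < b * \<gamma> s + C * s" by simp
    qed
    show "b * \<gamma> 0 + C * 0 = 0" using g0 by simp
    fix B
    obtain r where r: "r \<ge> 0" "\<gamma> r > B" using ub by blast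
    have "\<gamma> r \<le> b * \<gamma> r" using gnn[OF r(1)] b by (simp add: mult_le_cancel_right1)
    moreover have "0 \<le> C * r" using C r by simp
    ultimately show "\<exists>r\<ge>0. B < b * \<gamma> r + C * r" using r by (intro exI[of _ r]) auto
  qed
qed

lemma eps_limit:
  fixes g :: "real \<Rightarrow> real"
  assumes c: "continuous_on {0..} g" and m: "m \<ge> 0" and le: "\<And>e. e > 0 \<Longrightarrow> L \<le> A + g (m + e)"
  shows "L \<le> A + g m"
proof (rule ccontr)
  assume nt: "\<not> L \<le> A + g m"
  define e where "e = L - A - g m"
  have e: "e > 0" using nt by (simp add: e_def)
  have "continuous (at m within {0..}) g" using c m continuous_on_eq_continuous_within by auto
  then obtain d where d: "d > 0" "\<And>y. y \<in> {0..} \<Longrightarrow> dist y m < d \<Longrightarrow> dist (g y) (g m) < e"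
    using e unfolding continuous_within_eps_delta by blast
  have "dist (g (m + d/2)) (g m) < e" using d m by (intro d(2)) (auto simp: dist_real_def)
  moreover have "L \<le> A + g (m + d/2)" using le d by simp
  ultimately show False by (simp add: e_def dist_real_def abs_less_iff)
qed

locale mainloc =
  fixes G :: "(real^'n) set"
    and a :: "'n \<Rightarrow> 'n \<Rightarrow> real^'n \<Rightarrow> real"
    and f :: "real^'n \<Rightarrow> real \<Rightarrow> real^'n \<Rightarrow> real"
    and K :: real
    and X :: "(real^'n \<Rightarrow> real) set"
    and Uset :: "(real^'n \<Rightarrow> real) \<Rightarrow> (real \<Rightarrow> real^'n \<Rightarrow> real) set"
    and p :: ereal
  assumes oG: "open G" and bG: "bounded G" and neG: "G \<noteq> {}"
    and Kpos: "K > 0"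
    and ell: "\<forall>z\<in>closure G. \<forall>\<xi>::real^'n. (\<Sum>i\<in>UNIV. \<Sum>j\<in>UNIV. a i j z * \<xi>$i * \<xi>$j) \<ge> K * (norm \<xi>)\<^sup>2"
    and h1: "H1 a f G X Uset" and h2: "H2 G f" and h3: "H3 G X"
    and p1: "1 \<le> p"

context mainloc
begin

lemma psdG: "z \<in> G \<Longrightarrow> (\<Sum>i\<in>UNIV. \<Sum>j\<in>UNIV. a i j z * \<xi>$i * \<xi>$j) \<ge> 0"
proof -
  assume "z \<in> G"
  then have "z \<in> closure G" using closure_subset by auto
  then have "(\<Sum>i\<in>UNIV. \<Sum>j\<in>UNIV. a i j z * \<xi>$i * \<xi>$j) \<ge> K * (norm \<xi>)\<^sup>2" using ell by blast
  moreover have "K * (norm \<xi>)\<^sup>2 \<ge> 0" using Kpos by simp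
  ultimately show ?thesis by linarith
qed

lemma H2a: "\<forall>W::real set. bounded W \<longrightarrow> (\<exists>k>0. \<forall>w1\<in>W. \<forall>w2\<in>W. w1 > w2 \<longrightarrow>
        (\<forall>z\<in>G. \<forall>\<xi>. f z w1 \<xi> - f z w2 \<xi> < k * (w1 - w2)))"
  using h2 unfolding H2_def by blast

lemma frontier_ne: "frontier G \<noteq> {}"
proof -
  have "G \<noteq> UNIV" using bG not_bounded_UNIV by blast
  then show ?thesis using frontier_not_empty neG by blast
qed

lemma h1u: "(\<forall>x\<in>X. continuous_on (closure G) x) \<and>
     (\<forall>x\<in>X. \<forall>y\<in>X. (\<lambda>z. x z + y z) \<in> X) \<and>
     (\<forall>x\<in>X. \<forall>c. (\<lambda>z. c * x z) \<in> X) \<and>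
     (\<forall>c. (\<lambda>z. c) \<in> X) \<and>
     (\<forall>x0\<in>X.
        Uset x0 \<noteq> {} \<and>
        Uset x0 \<subseteq> {v \<in> Ucal G. \<forall>z\<in>frontier G. v 0 z = x0 z} \<and>
        (\<forall>v\<in>Ucal G. (\<forall>t\<ge>0. \<forall>z\<in>frontier G. v t z = x0 z) \<longrightarrow> v \<in> Uset x0) \<and>
        (\<forall>u\<in>Uset x0. \<exists>x. classical_solution a f G x0 u x \<and> (\<forall>t\<ge>0. x t \<in> X)))"
  using h1 unfolding H1_def .

lemma X_cont: "x \<in> X \<Longrightarrow> continuous_on (closure G) x"
  using h1u by (elim conjE) blast

lemma X_add: "x \<in> X \<Longrightarrow> y \<in> X \<Longrightarrow> (\<lambda>z. x z + y z) \<in> X"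
  using h1u by (elim conjE) blast

lemma X_const: "(\<lambda>z. c) \<in> X"
  using h1u by (elim conjE) blast

lemma X_add_const: "x \<in> X \<Longrightarrow> (\<lambda>z. x z + c) \<in> X"
  using X_add[of x "\<lambda>z. c"] X_const by simp

lemma h1x: "x0 \<in> X \<Longrightarrow> Uset x0 \<noteq> {} \<and>
        Uset x0 \<subseteq> {v \<in> Ucal G. \<forall>z\<in>frontier G. v 0 z = x0 z} \<and>
        (\<forall>v\<in>Ucal G. (\<forall>t\<ge>0. \<forall>z\<in>frontier G. v t z = x0 z) \<longrightarrow> v \<in> Uset x0) \<and>
        (\<forall>u\<in>Uset x0. \<exists>x. classical_solution a f G x0 u x \<and> (\<forall>t\<ge>0. x t \<in> X))"
  using h1u by (elim conjE) (erule bspec)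

lemma U_sub: "x0 \<in> X \<Longrightarrow> u \<in> Uset x0 \<Longrightarrow> u \<in> Ucal G \<and> (\<forall>z\<in>frontier G. u 0 z = x0 z)"
  using h1x by blast

lemma U_const: "x0 \<in> X \<Longrightarrow> (\<forall>z\<in>frontier G. x0 z = k) \<Longrightarrow> (\<lambda>s z. k) \<in> Uset x0"
proof -
  assume x0: "x0 \<in> X" and k: "\<forall>z\<in>frontier G. x0 z = k"
  have "\<forall>v\<in>Ucal G. (\<forall>t\<ge>0. \<forall>z\<in>frontier G. v t z = x0 z) \<longrightarrow> v \<in> Uset x0" using h1x[OF x0] by blast
  then show ?thesis using const_Ucal[of k G] k by auto
qed

lemma sol_ex: "x0 \<in> X \<Longrightarrow> u \<in> Uset x0 \<Longrightarrow> \<exists>x. classical_solution a f G x0 u x \<and> (\<forall>t\<ge>0. x t \<in> X)"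
  using h1x by blast

lemma phi_eq: "classical_solution a f G x0 u x \<Longrightarrow> t \<ge> 0 \<Longrightarrow> phi a f G t x0 u = restrict (x t) (closure G)"
  by (rule uniqueness[OF oG bG psdG H2a])

lemma comp: "classical_solution a f G x01 u1 x1 \<Longrightarrow> classical_solution a f G x02 u2 x2 \<Longrightarrow>
   (\<And>z. z \<in> G \<Longrightarrow> x01 z \<le> x02 z) \<Longrightarrow> (\<And>t z. t \<ge> 0 \<Longrightarrow> z \<in> frontier G \<Longrightarrow> u1 t z \<le> u2 t z) \<Longrightarrow>
   t \<ge> 0 \<Longrightarrow> z \<in> closure G \<Longrightarrow> x1 t z \<le> x2 t z"
  by (rule comparison[OF oG bG psdG H2a])

abbreviation "N1 \<equiv> pnorm G p (\<lambda>z. 1)"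

lemma N1: "N1 \<ge> 0" by (rule pn_one[OF oG bG neG p1])

lemma zG: "z \<in> G \<Longrightarrow> z \<in> closure G" using closure_subset by auto

end

context mainloc
begin

lemmas pnc = pn_cong[OF oG bG neG p1] and pnt = pn_tri[OF oG bG neG p1] and pnk = pn_const[OF oG bG neG p1]
  and pnm = pn_mono[OF oG bG neG p1] and pnn = pn_nonneg[OF oG bG neG p1] and pna = pn_abs[OF oG bG neG p1]

lemma I2_I3:
  assumes "\<exists>M c \<gamma>. M > 0 \<and> c > 0 \<and> Kinf \<gamma> \<and>
            (\<forall>t\<ge>0. \<forall>x\<in>X. \<forall>u\<in>Uset x. (\<forall>s\<ge>0. \<forall>z\<in>frontier G. u s z = u 0 z) \<longrightarrow>
               pnorm G p (phi a f G t x u) \<le> M * exp (- c * t) * pnorm G p x + \<gamma> (Unorm G u))"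
  shows "\<exists>M c \<gamma>. M > 0 \<and> c > 0 \<and> Kinf \<gamma> \<and>
            (\<forall>t\<ge>0. \<forall>y\<in>{y\<in>X. \<forall>z\<in>frontier G. y z = 0}. \<forall>k::real.
               pnorm G p (phiY a f G t y (\<lambda>s z. k)) \<le> M * exp (- c * t) * pnorm G p y + \<gamma> \<bar>k\<bar>)"
proof -
  from assms obtain M c \<gamma> where M: "M > 0" and c: "c > 0" and K: "Kinf \<gamma>" and
    B: "\<forall>t\<ge>0. \<forall>x\<in>X. \<forall>u\<in>Uset x. (\<forall>s\<ge>0. \<forall>z\<in>frontier G. u s z = u 0 z) \<longrightarrow>
               pnorm G p (phi a f G t x u) \<le> M * exp (- c * t) * pnorm G p x + \<gamma> (Unorm G u)"
    by blast
  define \<gamma>' where "\<gamma>' = (\<lambda>r. 1 * \<gamma> r + ((M + 1) * N1) * r)"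
  have K': "Kinf \<gamma>'" unfolding \<gamma>'_def by (rule Kinf_comb[OF K]) (use N1 M in auto)
  show ?thesis
  proof (rule exI[of _ M], rule exI[of _ c], rule exI[of _ \<gamma>'], intro conjI M c K' allI impI ballI)
    fix t :: real and y and k :: real
    assume t: "t \<ge> 0" and y: "y \<in> {y\<in>X. \<forall>z\<in>frontier G. y z = 0}"
    then have yX: "y \<in> X" and y0: "\<forall>z\<in>frontier G. y z = 0" by auto
    define x0 where "x0 = (\<lambda>z. y z + k)"
    have x0X: "x0 \<in> X" unfolding x0_def by (rule X_add_const[OF yX])
    have uU: "(\<lambda>s z. k) \<in> Uset x0" using U_const[OF x0X] y0 by (simp add: x0_def)
    obtain x where sol: "classical_solution a f G x0 (\<lambda>s z. k) x" and xX: "\<forall>t\<ge>0. x t \<in> X"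
      using sol_ex[OF x0X uU] by blast
    have xc: "continuous_on (closure G) (x t)" using X_cont xX t by blast
    have yc: "continuous_on (closure G) y" using X_cont yX by blast
    have ph: "phi a f G t x0 (\<lambda>s z. k) = restrict (x t) (closure G)" by (rule phi_eq[OF sol t])
    have bound: "pnorm G p (phi a f G t x0 (\<lambda>s z. k)) \<le> M * exp (- c * t) * pnorm G p x0 + \<gamma> (Unorm G (\<lambda>s z. k))"
      using B t x0X uU by auto
    have Un: "Unorm G (\<lambda>s z. k) = \<bar>k\<bar>" by (rule Unorm_const[OF frontier_ne])
    have pphi: "pnorm G p (phi a f G t x0 (\<lambda>s z. k)) = pnorm G p (x t)"
      by (rule pnc) (auto simp: ph zG)
    have eqY: "pnorm G p (phiY a f G t y (\<lambda>s z. k)) = pnorm G p (\<lambda>z. x t z + (- k))"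
    proof (rule pnc)
      fix z assume z: "z \<in> G"
      have "phi a f G t (\<lambda>z. y z + k) (\<lambda>s z. k) = restrict (x t) (closure G)" using ph by (simp add: x0_def)
      then show "phiY a f G t y (\<lambda>s z. k) z = x t z + - k" using z zG by (simp add: phiY_def)
    qed
    have tri: "pnorm G p (\<lambda>z. x t z + (- k)) \<le> pnorm G p (x t) + \<bar>k\<bar> * N1"
      using pnt[OF xc continuous_on_const, of "- k"] pnk[of "- k"] by simp
    have x0b: "pnorm G p x0 \<le> pnorm G p y + \<bar>k\<bar> * N1"
      using pnt[OF yc continuous_on_const, of k] pnk[of k] by (simp add: x0_def)
    define E where "E = exp (- c * t)"
    have E: "0 < E" "E \<le> 1" using c t by (auto simp: E_def)
    have "M * E * (\<bar>k\<bar> * N1) \<le> M * (\<bar>k\<bar> * N1)"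
      using E M N1 by (intro mult_right_mono) (auto intro: mult_nonneg_nonneg)
    moreover have "M * E * pnorm G p x0 \<le> M * E * (pnorm G p y + \<bar>k\<bar> * N1)"
      using x0b E M by (intro mult_left_mono) auto
    ultimately have "pnorm G p (phiY a f G t y (\<lambda>s z. k)) \<le> M * E * pnorm G p y + (\<gamma> \<bar>k\<bar> + (M + 1) * N1 * \<bar>k\<bar>)"
      using eqY tri bound pphi Un unfolding E_def[symmetric] by (simp add: algebra_simps)
    then show "pnorm G p (phiY a f G t y (\<lambda>s z. k)) \<le> M * exp (- c * t) * pnorm G p y + \<gamma>' \<bar>k\<bar>"
      by (simp add: \<gamma>'_def E_def)
  qed
qed

end

context mainloc
begin

lemma h3u: "\<forall>\<delta>>0. \<forall>a::real. \<forall>x\<in>X. \<exists>k. continuous_on (closure G) k \<and>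
        (\<forall>z\<in>closure G. 0 \<le> k z \<and> k z \<le> 1) \<and>
        (\<forall>z\<in>frontier G. k z = 1) \<and>
        (\<forall>z\<in>G. infdist z (frontier G) \<ge> \<delta> \<longrightarrow> k z = 0) \<and>
        (\<lambda>z. (1 - k z) * x z + a * k z) \<in> X"
  using h3 unfolding H3_def .

lemma cutoff:
  assumes "\<delta> > 0" "x \<in> X"
  obtains k where "continuous_on (closure G) k" "\<And>z. z \<in> closure G \<Longrightarrow> 0 \<le> k z \<and> k z \<le> 1"
    "\<And>z. z \<in> frontier G \<Longrightarrow> k z = 1" "\<And>z. z \<in> G \<Longrightarrow> infdist z (frontier G) \<ge> \<delta> \<Longrightarrow> k z = 0"
    "(\<lambda>z. (1 - k z) * x z + c * k z) \<in> X"
proof -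
  from h3u assms obtain k where "continuous_on (closure G) k \<and>
        (\<forall>z\<in>closure G. 0 \<le> k z \<and> k z \<le> 1) \<and>
        (\<forall>z\<in>frontier G. k z = 1) \<and>
        (\<forall>z\<in>G. infdist z (frontier G) \<ge> \<delta> \<longrightarrow> k z = 0) \<and>
        (\<lambda>z. (1 - k z) * x z + c * k z) \<in> X" by blast
  then show ?thesis using that by blast
qed

lemma frontier_closure: "frontier G \<subseteq> closure G" by (auto simp: frontier_def)

lemma near_frontier:
  assumes z: "z \<in> G" and d: "infdist z (frontier G) < \<delta>"
  shows "\<exists>s\<in>frontier G. dist z s < \<delta>"
proof -
  have "Inf (dist z ` frontier G) < \<delta>" using d infdist_notempty[OF frontier_ne] by simp
  then show ?thesis
    by (subst (asm) cINF_less_iff[OF frontier_ne]) (auto intro: bdd_belowI[of _ 0])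
qed


lemma I3_I1:
  assumes "\<exists>M c \<gamma>. M > 0 \<and> c > 0 \<and> Kinf \<gamma> \<and>
            (\<forall>t\<ge>0. \<forall>y\<in>{y\<in>X. \<forall>z\<in>frontier G. y z = 0}. \<forall>k::real.
               pnorm G p (phiY a f G t y (\<lambda>s z. k)) \<le> M * exp (- c * t) * pnorm G p y + \<gamma> \<bar>k\<bar>)"
  shows "\<exists>M c \<gamma>. M > 0 \<and> c > 0 \<and> Kinf \<gamma> \<and>
            (\<forall>t\<ge>0. \<forall>x\<in>X. \<forall>u\<in>Uset x.
               pnorm G p (phi a f G t x u) \<le> M * exp (- c * t) * pnorm G p x + \<gamma> (Unorm G u))"
proof -
  from assms obtain M c \<gamma> where M: "M > 0" and c: "c > 0" and K: "Kinf \<gamma>" and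
    B: "\<forall>t\<ge>0. \<forall>y\<in>{y\<in>X. \<forall>z\<in>frontier G. y z = 0}. \<forall>k::real.
               pnorm G p (phiY a f G t y (\<lambda>s z. k)) \<le> M * exp (- c * t) * pnorm G p y + \<gamma> \<bar>k\<bar>"
    by blast
  define \<gamma>' where "\<gamma>' = (\<lambda>r. 2 * \<gamma> r + ((1 + 2 * M) * N1) * r)"
  have K': "Kinf \<gamma>'" unfolding \<gamma>'_def by (rule Kinf_comb[OF K]) (use N1 M in auto)
  have gc: "continuous_on {0..} \<gamma>'" using K' unfolding Kinf_def by blast
  show ?thesis
  proof (rule exI[of _ "2 * M"], rule exI[of _ c], rule exI[of _ \<gamma>'], intro conjI c K' allI impI ballI)
    show "2 * M > 0" using M by simp
    fix t :: real and x0 u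
    assume t: "t \<ge> 0" and x0X: "x0 \<in> X" and uU: "u \<in> Uset x0"
    define m where "m = Unorm G u"
    have uC: "u \<in> Ucal G" and u0: "\<forall>z\<in>frontier G. u 0 z = x0 z" using U_sub[OF x0X uU] by auto
    have ub: "\<bar>u s z\<bar> \<le> m" if "s \<ge> 0" "z \<in> frontier G" for s z
      unfolding m_def by (rule Unorm_bound[OF uC that])
    have m0: "m \<ge> 0"
    proof -
      obtain z where "z \<in> frontier G" using frontier_ne by blast
      then show ?thesis using ub[of 0 z] by simp
    qed
    obtain x where sol: "classical_solution a f G x0 u x" and xX: "\<forall>t\<ge>0. x t \<in> X"
      using sol_ex[OF x0X uU] by blast
    have xc: "continuous_on (closure G) (x t)" using X_cont xX t by blast
    have x0c: "continuous_on (closure G) x0" using X_cont x0X by blast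
    have pphi: "pnorm G p (phi a f G t x0 u) = pnorm G p (x t)"
      by (rule pnc) (auto simp: phi_eq[OF sol t] zG)
    define E where "E = exp (- c * t)"
    have E: "0 < E" "E \<le> 1" using c t by (auto simp: E_def)
    have main: "pnorm G p (x t) \<le> 2 * M * E * pnorm G p x0 + \<gamma>' (m + \<epsilon>)" if eps: "\<epsilon> > 0" for \<epsilon>
    proof -
      define C where "C = m + \<epsilon>"
      have C: "C > 0" using m0 eps by (simp add: C_def)
      have "uniformly_continuous_on (closure G) x0"
        using x0c bG by (intro compact_uniformly_continuous) (auto simp: compact_closure)
      then obtain \<delta> where \<delta>: "\<delta> > 0"
        "\<And>z z'. z \<in> closure G \<Longrightarrow> z' \<in> closure G \<Longrightarrow> dist z' z < \<delta> \<Longrightarrow> dist (x0 z') (x0 z) < \<epsilon>"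
        using eps unfolding uniformly_continuous_on_def by metis
      have near: "\<bar>x0 z\<bar> < C" if z: "z \<in> G" "infdist z (frontier G) < \<delta>" for z
      proof -
        obtain s where s: "s \<in> frontier G" "dist z s < \<delta>" using near_frontier[OF z] by blast
        have "dist (x0 z) (x0 s) < \<epsilon>"
          using \<delta>(2)[of s z] s frontier_closure zG[OF z(1)] by (auto simp: dist_commute)
        moreover have "\<bar>x0 s\<bar> \<le> m" using ub[of 0 s] u0 s by simp
        ultimately show ?thesis by (simp add: C_def dist_real_def)
      qed
      obtain kp where kp: "continuous_on (closure G) kp" "\<And>z. z \<in> closure G \<Longrightarrow> 0 \<le> kp z \<and> kp z \<le> 1"
        "\<And>z. z \<in> frontier G \<Longrightarrow> kp z = 1" "\<And>z. z \<in> G \<Longrightarrow> infdist z (frontier G) \<ge> \<delta> \<Longrightarrow> kp z = 0"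
        "(\<lambda>z. (1 - kp z) * x0 z + C * kp z) \<in> X"
        using cutoff[OF \<delta>(1) x0X] by blast
      obtain km where km: "continuous_on (closure G) km" "\<And>z. z \<in> closure G \<Longrightarrow> 0 \<le> km z \<and> km z \<le> 1"
        "\<And>z. z \<in> frontier G \<Longrightarrow> km z = 1" "\<And>z. z \<in> G \<Longrightarrow> infdist z (frontier G) \<ge> \<delta> \<Longrightarrow> km z = 0"
        "(\<lambda>z. (1 - km z) * x0 z + (- C) * km z) \<in> X"
        using cutoff[OF \<delta>(1) x0X] by blast
      define x0p where "x0p = (\<lambda>z. (1 - kp z) * x0 z + C * kp z)"
      define x0m where "x0m = (\<lambda>z. (1 - km z) * x0 z + (- C) * km z)"
      have x0pX: "x0p \<in> X" and x0mX: "x0m \<in> X" using kp(5) km(5) by (simp_all add: x0p_def x0m_def)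
      have le_p: "x0 z \<le> x0p z" if z: "z \<in> G" for z
      proof (cases "infdist z (frontier G) < \<delta>")
        case True
        then have "\<bar>x0 z\<bar> < C" using near z by blast
        moreover have "kp z \<ge> 0" using kp(2) zG[OF z] by blast
        ultimately have "kp z * (C - x0 z) \<ge> 0" by simp
        then show ?thesis by (simp add: x0p_def algebra_simps)
      next
        case False then show ?thesis using kp(4)[OF z] by (simp add: x0p_def)
      qed
      have le_m: "x0m z \<le> x0 z" if z: "z \<in> G" for z
      proof (cases "infdist z (frontier G) < \<delta>")
        case True
        then have "\<bar>x0 z\<bar> < C" using near z by blast
        moreover have "km z \<ge> 0" using km(2) zG[OF z] by blast
        ultimately have "km z * (C + x0 z) \<ge> 0" by simp
        then show ?thesis by (simp add: x0m_def algebra_simps)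
      next
        case False then show ?thesis using km(4)[OF z] by (simp add: x0m_def)
      qed
      have fr_p: "\<forall>z\<in>frontier G. x0p z = C" using kp(3) by (simp add: x0p_def)
      have fr_m: "\<forall>z\<in>frontier G. x0m z = - C" using km(3) by (simp add: x0m_def)
      have uCp: "(\<lambda>s z. C) \<in> Uset x0p" by (rule U_const[OF x0pX fr_p])
      have uCm: "(\<lambda>s z. - C) \<in> Uset x0m" by (rule U_const[OF x0mX fr_m])
      obtain xp where solp: "classical_solution a f G x0p (\<lambda>s z. C) xp" and xpX: "\<forall>t\<ge>0. xp t \<in> X"
        using sol_ex[OF x0pX uCp] by blast
      obtain xm where solm: "classical_solution a f G x0m (\<lambda>s z. - C) xm" and xmX: "\<forall>t\<ge>0. xm t \<in> X"
        using sol_ex[OF x0mX uCm] by blast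
      have cmp1: "x t z \<le> xp t z" if "z \<in> closure G" for z
      proof (rule comp[OF sol solp le_p _ t that])
        fix s :: real and z assume "s \<ge> 0" "z \<in> frontier G"
        then have "\<bar>u s z\<bar> \<le> m" by (rule ub)
        then show "u s z \<le> C" using eps by (simp add: C_def)
      qed
      have cmp2: "xm t z \<le> x t z" if "z \<in> closure G" for z
      proof (rule comp[OF solm sol le_m _ t that])
        fix s :: real and z assume "s \<ge> 0" "z \<in> frontier G"
        then have "\<bar>u s z\<bar> \<le> m" by (rule ub)
        then show "- C \<le> u s z" using eps by (simp add: C_def)
      qed
      define yp where "yp = (\<lambda>z. x0p z + (- C))"
      define ym where "ym = (\<lambda>z. x0m z + C)"
      have ypY: "yp \<in> {y\<in>X. \<forall>z\<in>frontier G. y z = 0}"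
        using X_add_const[OF x0pX, of "- C"] fr_p by (simp add: yp_def)
      have ymY: "ym \<in> {y\<in>X. \<forall>z\<in>frontier G. y z = 0}"
        using X_add_const[OF x0mX] fr_m by (simp add: ym_def)
      have Bp: "pnorm G p (phiY a f G t yp (\<lambda>s z. C)) \<le> M * E * pnorm G p yp + \<gamma> \<bar>C\<bar>"
        using B t ypY unfolding E_def by blast
      have Bm: "pnorm G p (phiY a f G t ym (\<lambda>s z. - C)) \<le> M * E * pnorm G p ym + \<gamma> \<bar>- C\<bar>"
        using B t ymY unfolding E_def by blast
      define Yp where "Yp = (\<lambda>z. xp t z + (- C))"
      define Ym where "Ym = (\<lambda>z. xm t z + C)"
      have xpc: "continuous_on (closure G) (xp t)" using X_cont xpX t by blast
      have xmc: "continuous_on (closure G) (xm t)" using X_cont xmX t by blast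
      have Ypc: "continuous_on (closure G) Yp" unfolding Yp_def using xpc by (intro continuous_intros)
      have Ymc: "continuous_on (closure G) Ym" unfolding Ym_def using xmc by (intro continuous_intros)
      have eqp: "pnorm G p (phiY a f G t yp (\<lambda>s z. C)) = pnorm G p Yp"
      proof (rule pnc)
        fix z assume z: "z \<in> G"
        have e1: "(\<lambda>z. yp z + C) = x0p" by (simp add: yp_def)
        show "phiY a f G t yp (\<lambda>s z. C) z = Yp z"
          using z zG phi_eq[OF solp t] by (simp add: phiY_def e1 Yp_def)
      qed
      have eqm: "pnorm G p (phiY a f G t ym (\<lambda>s z. - C)) = pnorm G p Ym"
      proof (rule pnc)
        fix z assume z: "z \<in> G"
        have e1: "(\<lambda>z. ym z - C) = x0m" by (simp add: ym_def)
        show "phiY a f G t ym (\<lambda>s z. - C) z = Ym z"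
          using z zG phi_eq[OF solm t] by (simp add: phiY_def e1 Ym_def)
      qed
      have pw: "\<bar>x t z\<bar> \<le> \<bar>C + \<bar>Yp z\<bar> + \<bar>Ym z\<bar>\<bar>" if z: "z \<in> G" for z
        using cmp1[OF zG[OF z]] cmp2[OF zG[OF z]] C by (simp add: Yp_def Ym_def abs_le_iff) linarith
      have Rc: "continuous_on (closure G) (\<lambda>z. C + \<bar>Yp z\<bar> + \<bar>Ym z\<bar>)"
        using Ypc Ymc by (intro continuous_intros)
      have "pnorm G p (x t) \<le> pnorm G p (\<lambda>z. C + \<bar>Yp z\<bar> + \<bar>Ym z\<bar>)"
        by (rule pnm[OF xc Rc pw])
      also have "\<dots> \<le> pnorm G p (\<lambda>z. C + \<bar>Yp z\<bar>) + pnorm G p (\<lambda>z. \<bar>Ym z\<bar>)"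
      proof -
        have c1: "continuous_on (closure G) (\<lambda>z. C + \<bar>Yp z\<bar>)" using Ypc by (intro continuous_intros)
        have c2: "continuous_on (closure G) (\<lambda>z. \<bar>Ym z\<bar>)" using Ymc by (intro continuous_intros)
        show ?thesis using pnt[OF c1 c2] by simp
      qed
      also have "pnorm G p (\<lambda>z. C + \<bar>Yp z\<bar>) \<le> C * N1 + pnorm G p Yp"
      proof -
        have c1: "continuous_on (closure G) (\<lambda>z. C)" by (intro continuous_intros)
        have c2: "continuous_on (closure G) (\<lambda>z. \<bar>Yp z\<bar>)" using Ypc by (intro continuous_intros)
        show ?thesis using pnt[OF c1 c2] pnk[of C] pna[of Yp] C by simp
      qed
      finally have s1: "pnorm G p (x t) \<le> C * N1 + pnorm G p Yp + pnorm G p Ym"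
        using pna[of Ym] by simp
      have x0b: "pnorm G p (\<lambda>z. \<bar>x0 z\<bar> + C) \<le> pnorm G p x0 + C * N1"
      proof -
        have c1: "continuous_on (closure G) (\<lambda>z. \<bar>x0 z\<bar>)" using x0c by (intro continuous_intros)
        have c2: "continuous_on (closure G) (\<lambda>z. C)" by (intro continuous_intros)
        show ?thesis using pnt[OF c1 c2] pnk[of C] pna[of x0] C by simp
      qed
      have ypc: "continuous_on (closure G) yp" using X_cont ypY by blast
      have ymc: "continuous_on (closure G) ym" using X_cont ymY by blast
      have ypb: "pnorm G p yp \<le> pnorm G p x0 + C * N1"
      proof -
        have "pnorm G p yp \<le> pnorm G p (\<lambda>z. \<bar>x0 z\<bar> + C)"
        proof (rule pnm[OF ypc])
          show "continuous_on (closure G) (\<lambda>z. \<bar>x0 z\<bar> + C)" using x0c by (intro continuous_intros)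
          fix z assume z: "z \<in> G"
          have k01: "0 \<le> kp z" "kp z \<le> 1" using kp(2) zG[OF z] by auto
          have "yp z = (1 - kp z) * (x0 z - C)" by (simp add: yp_def x0p_def algebra_simps)
          then have "\<bar>yp z\<bar> = (1 - kp z) * \<bar>x0 z - C\<bar>" using k01 by (simp add: abs_mult)
          also have "\<dots> \<le> \<bar>x0 z - C\<bar>" using k01 by (intro mult_left_le_one_le) auto
          also have "\<dots> \<le> \<bar>\<bar>x0 z\<bar> + C\<bar>" using C by (simp add: abs_le_iff) linarith
          finally show "\<bar>yp z\<bar> \<le> \<bar>\<bar>x0 z\<bar> + C\<bar>" .
        qed
        then show ?thesis using x0b by simp
      qed
      have ymb: "pnorm G p ym \<le> pnorm G p x0 + C * N1"
      proof -
        have "pnorm G p ym \<le> pnorm G p (\<lambda>z. \<bar>x0 z\<bar> + C)"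
        proof (rule pnm[OF ymc])
          show "continuous_on (closure G) (\<lambda>z. \<bar>x0 z\<bar> + C)" using x0c by (intro continuous_intros)
          fix z assume z: "z \<in> G"
          have k01: "0 \<le> km z" "km z \<le> 1" using km(2) zG[OF z] by auto
          have "ym z = (1 - km z) * (x0 z + C)" by (simp add: ym_def x0m_def algebra_simps)
          then have "\<bar>ym z\<bar> = (1 - km z) * \<bar>x0 z + C\<bar>" using k01 by (simp add: abs_mult)
          also have "\<dots> \<le> \<bar>x0 z + C\<bar>" using k01 by (intro mult_left_le_one_le) auto
          also have "\<dots> \<le> \<bar>\<bar>x0 z\<bar> + C\<bar>" using C by (simp add: abs_le_iff) linarith
          finally show "\<bar>ym z\<bar> \<le> \<bar>\<bar>x0 z\<bar> + C\<bar>" .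
        qed
        then show ?thesis using x0b by simp
      qed
      have "M * E * (C * N1) \<le> M * (C * N1)"
        using E M N1 C by (intro mult_right_mono) auto
      moreover have "M * E * pnorm G p yp \<le> M * E * (pnorm G p x0 + C * N1)"
        using ypb E M by (intro mult_left_mono) auto
      moreover have "M * E * pnorm G p ym \<le> M * E * (pnorm G p x0 + C * N1)"
        using ymb E M by (intro mult_left_mono) auto
      ultimately have "pnorm G p (x t) \<le> 2 * M * E * pnorm G p x0 + (2 * \<gamma> C + (1 + 2 * M) * N1 * C)"
      proof -
        have e1: "M * E * (pnorm G p x0 + C * N1) = M * E * pnorm G p x0 + M * E * (C * N1)"
          by (simp add: algebra_simps)
        have e2: "(1 + 2 * M) * N1 * C = C * N1 + 2 * (M * (C * N1))" by (simp add: algebra_simps)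
        have e3: "\<gamma> \<bar>C\<bar> = \<gamma> C" "\<gamma> \<bar>- C\<bar> = \<gamma> C" using C by auto
        have e4: "2 * M * E * pnorm G p x0 = 2 * (M * E * pnorm G p x0)" by simp
        show ?thesis using s1 Bp Bm eqp eqm e1 e2 e3 e4 \<open>M * E * (C * N1) \<le> M * (C * N1)\<close>
          \<open>M * E * pnorm G p yp \<le> M * E * (pnorm G p x0 + C * N1)\<close>
          \<open>M * E * pnorm G p ym \<le> M * E * (pnorm G p x0 + C * N1)\<close> by linarith
      qed
      then show ?thesis by (simp add: \<gamma>'_def C_def)
    qed
    have "pnorm G p (x t) \<le> 2 * M * E * pnorm G p x0 + \<gamma>' m"
      by (rule eps_limit[OF gc m0 main])
    then show "pnorm G p (phi a f G t x0 u) \<le> 2 * M * exp (- c * t) * pnorm G p x0 + \<gamma>' (Unorm G u)"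
      using pphi by (simp add: E_def m_def)
  qed
qed

end

theorem mainTheorem6:
  fixes G :: "(real^'n) set"
    and a :: "'n \<Rightarrow> 'n \<Rightarrow> real^'n \<Rightarrow> real"
    and f :: "real^'n \<Rightarrow> real \<Rightarrow> real^'n \<Rightarrow> real"
    and K :: real
    and X :: "(real^'n \<Rightarrow> real) set"
    and Uset :: "(real^'n \<Rightarrow> real) \<Rightarrow> (real \<Rightarrow> real^'n \<Rightarrow> real) set"
    and p :: ereal
  assumes "open G" and "bounded G" and "G \<noteq> {}"
    and "\<forall>i j. continuous_on (closure G) (a i j)"
    and "continuous_on (closure G \<times> UNIV \<times> UNIV) (\<lambda>(z,w,\<xi>). f z w \<xi>)"
    and "K > 0"
    and "\<forall>z\<in>closure G. \<forall>\<xi>::real^'n. (\<Sum>i\<in>UNIV. \<Sum>j\<in>UNIV. a i j z * \<xi>$i * \<xi>$j) \<ge> K * (norm \<xi>)\<^sup>2"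
    and "H1 a f G X Uset" and "H2 G f" and "H3 G X"
    and "1 \<le> p"
  shows "((\<exists>M c \<gamma>. M > 0 \<and> c > 0 \<and> Kinf \<gamma> \<and>
            (\<forall>t\<ge>0. \<forall>x\<in>X. \<forall>u\<in>Uset x.
               pnorm G p (phi a f G t x u) \<le> M * exp (- c * t) * pnorm G p x + \<gamma> (Unorm G u)))
        \<longleftrightarrow>
          (\<exists>M c \<gamma>. M > 0 \<and> c > 0 \<and> Kinf \<gamma> \<and>
            (\<forall>t\<ge>0. \<forall>x\<in>X. \<forall>u\<in>Uset x. (\<forall>s\<ge>0. \<forall>z\<in>frontier G. u s z = u 0 z) \<longrightarrow>
               pnorm G p (phi a f G t x u) \<le> M * exp (- c * t) * pnorm G p x + \<gamma> (Unorm G u))))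
       \<and>
         ((\<exists>M c \<gamma>. M > 0 \<and> c > 0 \<and> Kinf \<gamma> \<and>
            (\<forall>t\<ge>0. \<forall>x\<in>X. \<forall>u\<in>Uset x. (\<forall>s\<ge>0. \<forall>z\<in>frontier G. u s z = u 0 z) \<longrightarrow>
               pnorm G p (phi a f G t x u) \<le> M * exp (- c * t) * pnorm G p x + \<gamma> (Unorm G u)))
        \<longleftrightarrow>
          (\<exists>M c \<gamma>. M > 0 \<and> c > 0 \<and> Kinf \<gamma> \<and>
            (\<forall>t\<ge>0. \<forall>y\<in>{y\<in>X. \<forall>z\<in>frontier G. y z = 0}. \<forall>k::real.
               pnorm G p (phiY a f G t y (\<lambda>s z. k)) \<le> M * exp (- c * t) * pnorm G p y + \<gamma> \<bar>k\<bar>)))"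
proof -
  have L: "mainloc G a f K X Uset p" unfolding mainloc_def using assms by auto
  note i23 = mainloc.I2_I3[OF L] and i31 = mainloc.I3_I1[OF L]
  show ?thesis
  proof (intro conjI iffI)
    assume h: "\<exists>M c \<gamma>. M > 0 \<and> c > 0 \<and> Kinf \<gamma> \<and>
            (\<forall>t\<ge>0. \<forall>x\<in>X. \<forall>u\<in>Uset x.
               pnorm G p (phi a f G t x u) \<le> M * exp (- c * t) * pnorm G p x + \<gamma> (Unorm G u))"
    then show "\<exists>M c \<gamma>. M > 0 \<and> c > 0 \<and> Kinf \<gamma> \<and>
            (\<forall>t\<ge>0. \<forall>x\<in>X. \<forall>u\<in>Uset x. (\<forall>s\<ge>0. \<forall>z\<in>frontier G. u s z = u 0 z) \<longrightarrow>
               pnorm G p (phi a f G t x u) \<le> M * exp (- c * t) * pnorm G p x + \<gamma> (Unorm G u))"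
      by blast
  next
    assume h: "\<exists>M c \<gamma>. M > 0 \<and> c > 0 \<and> Kinf \<gamma> \<and>
            (\<forall>t\<ge>0. \<forall>x\<in>X. \<forall>u\<in>Uset x. (\<forall>s\<ge>0. \<forall>z\<in>frontier G. u s z = u 0 z) \<longrightarrow>
               pnorm G p (phi a f G t x u) \<le> M * exp (- c * t) * pnorm G p x + \<gamma> (Unorm G u))"
    show "\<exists>M c \<gamma>. M > 0 \<and> c > 0 \<and> Kinf \<gamma> \<and>
            (\<forall>t\<ge>0. \<forall>x\<in>X. \<forall>u\<in>Uset x.
               pnorm G p (phi a f G t x u) \<le> M * exp (- c * t) * pnorm G p x + \<gamma> (Unorm G u))"
      by (rule i31[OF i23[OF h]])
  next
    assume h: "\<exists>M c \<gamma>. M > 0 \<and> c > 0 \<and> Kinf \<gamma> \<and>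
            (\<forall>t\<ge>0. \<forall>x\<in>X. \<forall>u\<in>Uset x. (\<forall>s\<ge>0. \<forall>z\<in>frontier G. u s z = u 0 z) \<longrightarrow>
               pnorm G p (phi a f G t x u) \<le> M * exp (- c * t) * pnorm G p x + \<gamma> (Unorm G u))"
    show "\<exists>M c \<gamma>. M > 0 \<and> c > 0 \<and> Kinf \<gamma> \<and>
            (\<forall>t\<ge>0. \<forall>y\<in>{y\<in>X. \<forall>z\<in>frontier G. y z = 0}. \<forall>k::real.
               pnorm G p (phiY a f G t y (\<lambda>s z. k)) \<le> M * exp (- c * t) * pnorm G p y + \<gamma> \<bar>k\<bar>)"
      by (rule i23[OF h])
  next
    assume h: "\<exists>M c \<gamma>. M > 0 \<and> c > 0 \<and> Kinf \<gamma> \<and>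
            (\<forall>t\<ge>0. \<forall>y\<in>{y\<in>X. \<forall>z\<in>frontier G. y z = 0}. \<forall>k::real.
               pnorm G p (phiY a f G t y (\<lambda>s z. k)) \<le> M * exp (- c * t) * pnorm G p y + \<gamma> \<bar>k\<bar>)"
    have "\<exists>M c \<gamma>. M > 0 \<and> c > 0 \<and> Kinf \<gamma> \<and>
            (\<forall>t\<ge>0. \<forall>x\<in>X. \<forall>u\<in>Uset x.
               pnorm G p (phi a f G t x u) \<le> M * exp (- c * t) * pnorm G p x + \<gamma> (Unorm G u))"
      by (rule i31[OF h])
    then show "\<exists>M c \<gamma>. M > 0 \<and> c > 0 \<and> Kinf \<gamma> \<and>
            (\<forall>t\<ge>0. \<forall>x\<in>X. \<forall>u\<in>Uset x. (\<forall>s\<ge>0. \<forall>z\<in>frontier G. u s z = u 0 z) \<longrightarrow>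
               pnorm G p (phi a f G t x u) \<le> M * exp (- c * t) * pnorm G p x + \<gamma> (Unorm G u))"
      by blast
  qed
qed

end
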